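(* Let $p$ be an odd prime, $m\in\{1,\ldots,p-1\}$, $d\ge0$ an integer, and $n=mp^d$. Then for every $i\in\mathbb{Z}_p$, \[ c^B_{p,i}(n)=\begin{cases} 2^{n-m}\,|\{\gamma\models_0 m: r^B_\gamma\equiv i\pmod p\}| & \text{if } i=0 \text{ or } d=0,\\ 2^{n-m-1}\,|\{\gamma\models_0 m: r^B_\gamma\equiv i\text{ or } r^B_\gamma\equiv -i\pmod p\}| & \text{otherwise.}\end{cases} \]
   Context: A signed permutation of $[n]$ is a bijection $w$ of $\{\pm1,\ldots,\pm n\}$ with $w(-i)=-w(i)$; these form $\mathfrak{S}^B_n$. With $w(0):=0$, $D(w)=\{i\in\{0,\ldots,n-1\}: w(i)>w(i+1)\}$. A pseudo-composition of $n$ ($\alpha\models_0 n$) is a sequence $(\alpha_1,\ldots,\alpha_\ell)$ of integers with $\alpha_1\ge0$, $\alpha_2,\ldots,\alpha_\ell>0$ and sum $n$, with $D(\alpha)=\{\alpha_1,\alpha_1+\alpha_2,\ldots,\alpha_1+\cdots+\alpha_{\ell-1}\}$. The type $B$ ribbon number is $r^B_\alpha=|\{w\in\mathfrak{S}^B_n: D(w)=D(\alpha)\}|$ and $c^B_{p,i}(n)=|\{\alpha\models_0 n: r^B_\alpha\equiv i\pmod p\}|$. *)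

theory Defs
  imports "HOL-Number_Theory.Number_Theory"
begin

text \<open>Signed permutations of [n], as functions on the integers: a bijection of
  {-n..n} - {0} commuting with negation, extended by the identity elsewhere
  (so w 0 = 0).\<close>
definition signed_perms :: "nat \<Rightarrow> (int \<Rightarrow> int) set" where
  "signed_perms n = {w. bij_betw w ({- int n..int n} - {0}) ({- int n..int n} - {0})
      \<and> (\<forall>i. w (- i) = - w i)
      \<and> (\<forall>i. i \<notin> {- int n..int n} - {0} \<longrightarrow> w i = i)}"

definition descents_B :: "nat \<Rightarrow> (int \<Rightarrow> int) \<Rightarrow> nat set" where
  "descents_B n w = {i. i < n \<and> w (int i) > w (int i + 1)}"

definition pseudo_comps :: "nat \<Rightarrow> nat list set" where
  "pseudo_comps n = {\<alpha>. \<alpha> \<noteq> [] \<and> (\<forall>a \<in> set (tl \<alpha>). a > 0) \<and> sum_list \<alpha> = n}"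

definition comp_descents :: "nat list \<Rightarrow> nat set" where
  "comp_descents \<alpha> = {sum_list (take k \<alpha>) | k. 1 \<le> k \<and> k < length \<alpha>}"

definition ribbonB :: "nat list \<Rightarrow> nat" where
  "ribbonB \<alpha> = card {w \<in> signed_perms (sum_list \<alpha>). descents_B (sum_list \<alpha>) w = comp_descents \<alpha>}"

definition cB :: "nat \<Rightarrow> int \<Rightarrow> nat \<Rightarrow> nat" where
  "cB p i n = card {\<alpha> \<in> pseudo_comps n. [int (ribbonB \<alpha>) = i] (mod int p)}"

end

theory Submission
  imports Defs
begin

lemma sum_two_deltas: "(\<Sum>j\<le>k. (if j = 0 then A else 0) + (if j = p then B else 0))
      = A + (if p \<le> (k::nat) then B else (0::nat))"
  by (simp add: sum.distrib)

lemma choose_mult_p: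
  fixes p :: nat assumes p: "prime p"
  shows "((a * p) choose k) mod p = (if p dvd k then a choose (k div p) else 0) mod p"
proof (induction a arbitrary: k)
  case 0
  have p0: "p > 0" using p prime_gt_0_nat by blast
  show ?case
  proof (cases "k = 0")
    case False
    then have "p dvd k \<Longrightarrow> k div p \<noteq> 0" using p0 by (auto elim!: dvdE)
    then show ?thesis using False by (auto simp: binomial_eq_0)
  qed simp
next
  case (Suc a)
  have p0: "p > 0" using p prime_gt_0_nat by blast
  have "(Suc a * p) choose k = (\<Sum>j\<le>k. (p choose j) * ((a * p) choose (k - j)))"
    using vandermonde[of p "a*p" k] by (simp add: add.commute)
  also have "\<dots> mod p = (\<Sum>j\<le>k. (if j = 0 then (a*p) choose k else 0) + (if j = p then (a*p) choose (k - p) else 0)) mod p"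
  proof (rule mod_sum_eq[symmetric, THEN trans], rule trans[OF _ mod_sum_eq], rule arg_cong[where f="\<lambda>x. x mod p"], rule sum.cong[OF refl])
    fix j assume "j \<in> {..k}"
    show "(p choose j) * ((a * p) choose (k - j)) mod p = ((if j = 0 then (a*p) choose k else 0) + (if j = p then (a*p) choose (k - p) else 0)) mod p"
    proof (cases "j = 0 \<or> j = p")
      case True then show ?thesis using p0 by auto
    next
      case False
      then have "p dvd (p choose j)"
      proof (cases "j < p")
        case True then show ?thesis using False p dvd_choose_prime by auto
      next
        case F: False then have "p < j" using False by auto
        then show ?thesis by (simp add: binomial_eq_0)
      qed
      then show ?thesis using False by auto
    qed
  qed
  also have "(\<Sum>j\<le>k. (if j = 0 then (a*p) choose k else 0) + (if j = p then (a*p) choose (k - p) else 0))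
      = ((a*p) choose k) + (if p \<le> k then (a*p) choose (k - p) else 0)"
    by (rule sum_two_deltas)
  also have "\<dots> mod p = ((if p dvd k then a choose (k div p) else 0) + (if p \<le> k then (if p dvd (k - p) then a choose ((k-p) div p) else 0) else 0)) mod p"
    by (rule mod_add_cong) (auto simp: Suc.IH)
  also have "(if p dvd k then a choose (k div p) else 0) + (if p \<le> k then (if p dvd (k - p) then a choose ((k-p) div p) else 0) else 0)
     = (if p dvd k then Suc a choose (k div p) else 0)"
  proof (cases "p \<le> k")
    case True
    have dv: "p dvd (k - p) \<longleftrightarrow> p dvd k" using True by (simp add: dvd_minus_self)
    have j: "k div p = Suc ((k - p) div p)" using True p0 by (simp add: le_div_geq)
    have kd: "(k - p) div p = k div p - 1" using j by simp
    show ?thesis using True dv kd j by auto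
  next
    case False
    then have "p dvd k \<longleftrightarrow> k = 0" using p0 by (auto dest: dvd_imp_le)
    then show ?thesis using False by auto
  qed
  finally show ?case .
qed

lemma choose_mult_pp:
  fixes p :: nat assumes p: "prime p"
  shows "((a * p ^ d) choose k) mod p = (if p ^ d dvd k then a choose (k div p ^ d) else 0) mod p"
proof (induction d arbitrary: k)
  case 0 then show ?case by simp
next
  case (Suc d)
  have p0: "p > 0" using p prime_gt_0_nat by blast
  have "((a * p ^ Suc d) choose k) mod p = (((a * p ^ d) * p) choose k) mod p" by (simp add: ac_simps)
  also have "\<dots> = (if p dvd k then (a * p ^ d) choose (k div p) else 0) mod p"
    by (rule choose_mult_p[OF p])
  also have "\<dots> = (if p dvd k then (if p ^ d dvd (k div p) then a choose (k div p div p ^ d) else 0) else 0) mod p"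
    using Suc.IH[of "k div p"] by auto
  also have "\<dots> = (if p ^ Suc d dvd k then a choose (k div p ^ Suc d) else 0) mod p"
  proof -
    have "p ^ Suc d dvd k \<longleftrightarrow> p dvd k \<and> p ^ d dvd (k div p)"
      using p0 by (auto elim!: dvdE simp: mult.assoc)
    moreover have "k div p div p ^ d = k div p ^ Suc d" by (simp add: div_mult2_eq)
    ultimately show ?thesis by auto
  qed
  finally show ?case .
qed

lemma pow2_pp:
  fixes p :: nat assumes p: "prime p" and odd: "odd p"
  shows "(2 ^ (p ^ d * x)) mod p = (2 ^ x) mod (p::nat)"
proof (induction d arbitrary: x)
  case 0 then show ?case by simp
next
  case (Suc d)
  have p1: "p > 1" using p prime_gt_1_nat by blast
  have "\<not> p dvd 2 ^ x"
  proof
    assume "p dvd 2 ^ x"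
    then have "p dvd 2" using p prime_dvd_power by blast
    then have "p \<le> 2" by (simp add: dvd_imp_le)
    then have "p = 2" using p1 by auto
    then show False using odd by simp
  qed
  then have "[(2 ^ x) ^ (p - 1) = 1] (mod p)" using fermat_theorem[OF p] by blast
  then have "[(2 ^ x) ^ (p - 1) * 2 ^ x = 1 * 2 ^ x] (mod p)" by (rule cong_mult) simp
  moreover have "(2 ^ x) ^ (p - 1) * 2 ^ x = (2::nat) ^ (p * x)"
    using p1 by (metis power_Suc2 Suc_diff_1 less_trans zero_less_one power_mult mult.commute)
  ultimately have "[2 ^ (p * x) = 2 ^ x] (mod p)" by simp
  then have e: "2 ^ (p * x) mod p = (2::nat) ^ x mod p" by (simp add: cong_def)
  have eq: "(2::nat) ^ (p ^ Suc d * x) = 2 ^ (p ^ d * (p * x))" by (simp add: ac_simps)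
  show ?case using Suc.IH[of "p * x"] e unfolding eq by (simp only:)
qed

definition SA :: "int set \<Rightarrow> int list set" where
  "SA V = {xs. distinct (map abs xs) \<and> set (map abs xs) = V}"

definition Dl :: "int list \<Rightarrow> nat set" where
  "Dl xs = {i. i < length xs \<and> (0#xs)!i > xs!i}"

definition ZS :: "int set \<Rightarrow> nat \<Rightarrow> int set set" where
  "ZS V j = {Z. finite Z \<and> inj_on abs Z \<and> abs ` Z \<subseteq> V \<and> card Z = j}"

definition cnt :: "int set \<Rightarrow> nat set \<Rightarrow> nat" where
  "cnt V T = card {xs \<in> SA V. Dl xs \<subseteq> T}"

lemma SA_length: "xs \<in> SA V \<Longrightarrow> length xs = card V"
  unfolding SA_def using distinct_card by fastforce

lemma finite_SA: assumes "finite V" shows "finite (SA V)"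
proof -
  have "SA V \<subseteq> {xs. set xs \<subseteq> V \<union> uminus ` V \<and> length xs = card V}"
  proof
    fix xs assume xs: "xs \<in> SA V"
    have "set xs \<subseteq> V \<union> uminus ` V"
    proof
      fix x assume "x \<in> set xs"
      then have "abs x \<in> V" using xs unfolding SA_def by auto
      show "x \<in> V \<union> uminus ` V"
      proof (cases "x \<ge> 0")
        case True then show ?thesis using \<open>abs x \<in> V\<close> by simp
      next
        case False then have "-x \<in> V" using \<open>abs x \<in> V\<close> by simp
        then have "-(-x) \<in> uminus ` V" by blast
        then show ?thesis by simp
      qed
    qed
    then show "xs \<in> {xs. set xs \<subseteq> V \<union> uminus ` V \<and> length xs = card V}"
      using SA_length[OF xs] by auto
  qed
  then show ?thesis by (rule finite_subset) (simp add: finite_lists_length_eq assms)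
qed

lemma finite_ZS: assumes "finite V" shows "finite (ZS V j)"
proof -
  have "ZS V j \<subseteq> Pow (V \<union> uminus ` V)"
  proof
    fix Z assume "Z \<in> ZS V j"
    then have "abs ` Z \<subseteq> V" unfolding ZS_def by auto
    show "Z \<in> Pow (V \<union> uminus ` V)"
    proof (rule PowI, rule subsetI)
      fix x assume "x \<in> Z"
      then have "abs x \<in> V" using \<open>abs ` Z \<subseteq> V\<close> by auto
      show "x \<in> V \<union> uminus ` V"
      proof (cases "x \<ge> 0")
        case True then show ?thesis using \<open>abs x \<in> V\<close> by simp
      next
        case False then have "-x \<in> V" using \<open>abs x \<in> V\<close> by simp
        then have "-(-x) \<in> uminus ` V" by blast
        then show ?thesis by simp
      qed
    qed
  qed
  then show ?thesis by (rule finite_subset) (simp add: assms)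
qed

lemma Dl_sub: "Dl xs \<subseteq> {..<length xs}" unfolding Dl_def by auto

lemma Dl_append_mem:
  assumes "length ys = t" "i \<noteq> t"
  shows "i \<in> Dl (ys @ zs) \<longleftrightarrow> (i < t \<and> i \<in> Dl ys) \<or> (t < i \<and> i < t + length zs \<and> zs!(i-t-1) > zs!(i-t))"
proof (cases "i < t")
  case True
  then show ?thesis using assms unfolding Dl_def
    by (cases i) (auto simp: nth_append)
next
  case False
  then have "t < i" using assms by auto
  then obtain i' where i': "i = Suc i'" "t \<le> i'" by (cases i) auto
  have a1: "(0 # ys @ zs) ! i = zs ! (i - t - 1)" using i' assms by (simp add: nth_append)
  have a2: "i < length (ys @ zs) \<Longrightarrow> (ys @ zs) ! i = zs ! (i - t)" using i' assms by (simp add: nth_append)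
  have "i \<notin> Dl ys" using i' assms unfolding Dl_def by auto
  then show ?thesis using a1 a2 \<open>t < i\<close> assms unfolding Dl_def by auto
qed

lemma SA_facts:
  assumes "xs \<in> SA V" "V \<subseteq> {0<..}"
  shows "distinct xs" "0 \<notin> set xs"
  using assms unfolding SA_def by (auto simp: distinct_map)

lemma base_char:
  assumes fin: "finite V" and pos: "V \<subseteq> {0<..}" and xs: "xs \<in> SA V" and D: "Dl xs \<subseteq> {}"
  shows "xs = sorted_list_of_set V"
proof -
  have "sorted (0#xs)"
    unfolding sorted_iff_nth_Suc
  proof (intro allI impI)
    fix i assume "Suc i < length (0#xs)"
    then have "i \<notin> Dl xs" "i < length xs" using D by auto
    then show "(0#xs)!i \<le> (0#xs)!Suc i" unfolding Dl_def by auto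
  qed
  moreover have "distinct (0#xs)" using SA_facts[OF xs pos] by simp
  ultimately have "sorted_wrt (<) (0#xs)" using strict_sorted_iff by blast
  then have sw: "sorted_wrt (<) xs" and p: "\<forall>x\<in>set xs. 0 < x"
    by (metis sorted_wrt.simps(2))+
  then have "map abs xs = xs" by (intro map_idI) auto
  moreover have "set (map abs xs) = V" using xs unfolding SA_def by blast
  ultimately have "set xs = V" by (simp only:)
  then have "sorted_wrt (<) xs \<and> set xs = V \<and> length xs = card V" using sw SA_length[OF xs] by blast
  then show ?thesis using sorted_list_of_set_unique[OF fin, of xs] by simp
qed

lemma base_mem:
  assumes fin: "finite V" and pos: "V \<subseteq> {0<..}"
  shows "sorted_list_of_set V \<in> SA V" "Dl (sorted_list_of_set V) = {}"
proof -
  let ?l = "sorted_list_of_set V"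
  have s: "set ?l = V" "sorted_wrt (<) ?l" using fin by auto
  have p: "\<forall>x\<in>set ?l. 0 < x" using s pos by auto
  then have "map abs ?l = ?l" by (intro map_idI) auto
  then have "set (map abs ?l) = V" using s by metis
  moreover have "distinct ?l" using s(2) strict_sorted_iff by blast
  then have "distinct (map abs ?l)" using \<open>map abs ?l = ?l\<close> by simp
  ultimately show "?l \<in> SA V" unfolding SA_def by blast
  have "sorted_wrt (<) (0#?l)" using s p by simp
  have "\<And>i. i < length ?l \<Longrightarrow> (0#?l)!i < ?l!i"
  proof -
    fix i assume "i < length ?l"
    have "\<forall>i j. i < j \<longrightarrow> j < length (0#?l) \<longrightarrow> (0#?l)!i < (0#?l)!j"
      using \<open>sorted_wrt (<) (0#?l)\<close> sorted_wrt_iff_nth_less[of "(<)" "0#?l"] by blast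
    moreover have "i < Suc i" "Suc i < length (0#?l)" using \<open>i < length ?l\<close> by simp_all
    ultimately have "(0#?l)!i < (0#?l)!(Suc i)" by blast
    then show "(0#?l)!i < ?l!i" by simp
  qed
  then show "Dl ?l = {}" unfolding Dl_def
    using less_asym by blast
qed

lemma cnt_empty:
  assumes fin: "finite V" and pos: "V \<subseteq> {0<..}"
  shows "cnt V {} = 1"
proof -
  have "{xs \<in> SA V. Dl xs \<subseteq> {}} = {sorted_list_of_set V}"
  proof (intro equalityI subsetI)
    fix xs assume "xs \<in> {xs \<in> SA V. Dl xs \<subseteq> {}}"
    then show "xs \<in> {sorted_list_of_set V}" using base_char[OF fin pos] by blast
  next
    fix xs assume "xs \<in> {sorted_list_of_set V}"
    then show "xs \<in> {xs \<in> SA V. Dl xs \<subseteq> {}}" using base_mem[OF fin pos] by simp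
  qed
  then show ?thesis unfolding cnt_def by simp
qed

lemma rec_set:
  assumes fin: "finite V" and pos: "V \<subseteq> {0<..}" and tk: "t < card V" and T: "T \<subseteq> {..<t}"
  shows "{xs \<in> SA V. Dl xs \<subseteq> insert t T} =
    (\<Union>Z \<in> ZS V (card V - t). (\<lambda>ys. ys @ sorted_list_of_set Z) ` {ys \<in> SA (V - abs ` Z). Dl ys \<subseteq> T})"
proof (intro equalityI subsetI)
  fix xs assume "xs \<in> {xs \<in> SA V. Dl xs \<subseteq> insert t T}"
  then have xs: "xs \<in> SA V" and D: "Dl xs \<subseteq> insert t T" by auto
  define ys where "ys = take t xs"
  define zs where "zs = drop t xs"
  define Z where "Z = set zs"
  have xsd: "xs = ys @ zs" unfolding ys_def zs_def by simp
  have lx: "length xs = card V" using SA_length[OF xs] .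
  have ly: "length ys = t" unfolding ys_def using lx tk by simp
  have lz: "length zs = card V - t" unfolding zs_def using lx by simp
  have dxs: "distinct (map abs xs)" and sxs: "set (map abs xs) = V" using xs unfolding SA_def by auto
  have dys: "distinct (map abs ys)" and dzs: "distinct (map abs zs)"
    and disj: "set (map abs ys) \<inter> set (map abs zs) = {}"
    using dxs unfolding xsd by (simp_all only: map_append distinct_append)
  have "sorted zs" unfolding sorted_iff_nth_Suc
  proof (intro allI impI)
    fix j assume j: "Suc j < length zs"
    let ?i = "t + Suc j"
    have "?i \<notin> Dl xs"
    proof
      assume "?i \<in> Dl xs"
      then have "?i \<in> T" using D by auto
      then show False using T by auto
    qed
    then have "\<not> (zs!(?i-t-1) > zs!(?i-t))" using Dl_append_mem[OF ly, of ?i zs] j unfolding xsd by auto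
    then show "zs!j \<le> zs!Suc j" by simp
  qed
  moreover have "distinct zs" using dzs by (simp add: distinct_map)
  ultimately have swz: "sorted_wrt (<) zs" by (simp add: strict_sorted_iff)
  have cz: "card Z = length zs" unfolding Z_def using \<open>distinct zs\<close> by (simp add: distinct_card)
  have slz: "sorted_list_of_set Z = zs"
    using sorted_list_of_set_unique[of Z zs] swz cz unfolding Z_def by simp
  have "Z \<in> ZS V (card V - t)"
  proof -
    have "inj_on abs Z" using dzs unfolding Z_def by (simp add: distinct_map)
    moreover have "abs ` Z \<subseteq> V" using sxs unfolding xsd Z_def by auto
    ultimately show ?thesis unfolding ZS_def using cz lz Z_def by simp
  qed
  moreover have "ys \<in> {ys \<in> SA (V - abs ` Z). Dl ys \<subseteq> T}"
  proof -
    have "set (map abs ys) = V - abs ` Z"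
      using sxs disj unfolding xsd Z_def by auto
    then have "ys \<in> SA (V - abs ` Z)" using dys unfolding SA_def by blast
    moreover have "Dl ys \<subseteq> T"
    proof
      fix i assume i: "i \<in> Dl ys"
      then have "i < t" using Dl_sub[of ys] ly by auto
      then have "i \<in> Dl xs" using Dl_append_mem[OF ly, of i zs] i unfolding xsd by auto
      then show "i \<in> T" using D \<open>i < t\<close> by auto
    qed
    ultimately show ?thesis by blast
  qed
  moreover have "xs = ys @ sorted_list_of_set Z" using xsd slz by simp
  ultimately show "xs \<in> (\<Union>Z \<in> ZS V (card V - t). (\<lambda>ys. ys @ sorted_list_of_set Z) ` {ys \<in> SA (V - abs ` Z). Dl ys \<subseteq> T})"
    by blast
next
  fix xs assume "xs \<in> (\<Union>Z \<in> ZS V (card V - t). (\<lambda>ys. ys @ sorted_list_of_set Z) ` {ys \<in> SA (V - abs ` Z). Dl ys \<subseteq> T})"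
  then obtain Z ys where Z: "Z \<in> ZS V (card V - t)" and ys: "ys \<in> SA (V - abs ` Z)" and Dy: "Dl ys \<subseteq> T"
    and xsd: "xs = ys @ sorted_list_of_set Z" by blast
  define zs where "zs = sorted_list_of_set Z"
  have fZ: "finite Z" and ijZ: "inj_on abs Z" and aZ: "abs ` Z \<subseteq> V" and cZ: "card Z = card V - t"
    using Z unfolding ZS_def by auto
  have swz: "sorted_wrt (<) zs" and szs: "set zs = Z" and lz: "length zs = card Z"
    unfolding zs_def using fZ by auto
  have "distinct zs" using swz by (simp add: strict_sorted_iff)
  then have dzs: "distinct (map abs zs)" using ijZ szs by (simp add: distinct_map)
  have caZ: "card (abs ` Z) = card V - t" using card_image[OF ijZ] cZ by simp
  have "length ys = card (V - abs ` Z)" using SA_length[OF ys] .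
  also have "\<dots> = card V - card (abs ` Z)" using card_Diff_subset[OF finite_imageI[OF fZ] aZ] .
  also have "\<dots> = t" using caZ tk by simp
  finally have ly: "length ys = t" .
  have dys: "distinct (map abs ys)" and sys: "set (map abs ys) = V - abs ` Z" using ys unfolding SA_def by auto
  have "xs \<in> SA V"
  proof -
    have "distinct (map abs xs)" unfolding xsd zs_def[symmetric] using dys dzs sys szs
      by (auto simp only: map_append distinct_append set_map)
    moreover have "set (map abs xs) = V" unfolding xsd zs_def[symmetric] using sys szs aZ by auto
    ultimately show ?thesis unfolding SA_def by blast
  qed
  moreover have "Dl xs \<subseteq> insert t T"
  proof
    fix i assume i: "i \<in> Dl xs"
    show "i \<in> insert t T"
    proof (cases "i = t")
      case False
      have "\<not> (t < i \<and> i < t + length zs \<and> zs!(i-t-1) > zs!(i-t))"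
      proof
        assume h: "t < i \<and> i < t + length zs \<and> zs!(i-t-1) > zs!(i-t)"
        then have "i-t-1 < i - t" "i - t < length zs" by auto
        then have "zs!(i-t-1) < zs!(i-t)" using swz sorted_wrt_iff_nth_less[of "(<)" zs] by blast
        then show False using h by simp
      qed
      then have "i < t \<and> i \<in> Dl ys" using Dl_append_mem[OF ly False, of zs] i unfolding xsd zs_def by blast
      then show ?thesis using Dy by auto
    qed simp
  qed
  ultimately show "xs \<in> {xs \<in> SA V. Dl xs \<subseteq> insert t T}" by blast
qed

lemma cnt_rec:
  assumes fin: "finite V" and pos: "V \<subseteq> {0<..}" and tk: "t < card V" and T: "T \<subseteq> {..<t}"
  shows "cnt V (insert t T) = (\<Sum>Z\<in>ZS V (card V - t). cnt (V - abs ` Z) T)"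
proof -
  let ?A = "\<lambda>Z. (\<lambda>ys. ys @ sorted_list_of_set Z) ` {ys \<in> SA (V - abs ` Z). Dl ys \<subseteq> T}"
  have "cnt V (insert t T) = card (\<Union>Z \<in> ZS V (card V - t). ?A Z)"
    unfolding cnt_def rec_set[OF assms] ..
  also have "\<dots> = (\<Sum>Z\<in>ZS V (card V - t). card (?A Z))"
  proof (rule card_UN_disjoint)
    show "finite (ZS V (card V - t))" using finite_ZS[OF fin] .
    show "\<forall>Z\<in>ZS V (card V - t). finite (?A Z)"
      using finite_SA[of "V - _"] fin by auto
    show "\<forall>Z1\<in>ZS V (card V - t). \<forall>Z2\<in>ZS V (card V - t). Z1 \<noteq> Z2 \<longrightarrow> ?A Z1 \<inter> ?A Z2 = {}"
    proof (intro ballI impI)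
      fix Z1 Z2 assume Z1: "Z1 \<in> ZS V (card V - t)" and Z2: "Z2 \<in> ZS V (card V - t)" and ne: "Z1 \<noteq> Z2"
      have f1: "finite Z1" "card Z1 = card V - t" using Z1 unfolding ZS_def by auto
      have f2: "finite Z2" "card Z2 = card V - t" using Z2 unfolding ZS_def by auto
      have l: "length (sorted_list_of_set Z1) = length (sorted_list_of_set Z2)" using f1 f2 by simp
      show "?A Z1 \<inter> ?A Z2 = {}"
      proof (rule ccontr)
        assume "?A Z1 \<inter> ?A Z2 \<noteq> {}"
        then obtain y1 y2 where "y1 @ sorted_list_of_set Z1 = y2 @ sorted_list_of_set Z2" by blast
        then have "sorted_list_of_set Z1 = sorted_list_of_set Z2" using append_eq_append_conv[of _ _ "sorted_list_of_set Z1" "sorted_list_of_set Z2"] l by blast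
        then have "set (sorted_list_of_set Z1) = set (sorted_list_of_set Z2)" by simp
        then show False using ne f1 f2 by simp
      qed
    qed
  qed
  also have "\<dots> = (\<Sum>Z\<in>ZS V (card V - t). cnt (V - abs ` Z) T)"
  proof (rule sum.cong[OF refl])
    fix Z
    have "inj_on (\<lambda>ys. ys @ sorted_list_of_set Z) {ys \<in> SA (V - abs ` Z). Dl ys \<subseteq> T}"
      by (rule inj_onI) simp
    then show "card (?A Z) = cnt (V - abs ` Z) T" unfolding cnt_def by (rule card_image)
  qed
  finally show ?thesis .
qed

lemma ZS_empty: "ZS V 0 = {{}}"
  unfolding ZS_def by auto

lemma ZS_card:
  assumes fin: "finite V" and pos: "V \<subseteq> {0<..}"
  shows "card (ZS V j) = (card V choose j) * 2 ^ j"
  using fin pos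
proof (induction V arbitrary: j rule: finite_induct)
  case empty
  have "ZS {} j = (if j = 0 then {{}} else {})" unfolding ZS_def by auto
  then show ?case by simp
next
  case (insert v V)
  have v: "v > 0" using insert.prems by auto
  have posV: "V \<subseteq> {0<..}" using insert.prems by auto
  show ?case
  proof (cases j)
    case 0 then show ?thesis by (simp add: ZS_empty)
  next
    case (Suc j')
    have nv: "\<And>Z z. Z \<in> ZS V j' \<Longrightarrow> z \<in> Z \<Longrightarrow> abs z \<noteq> v"
      using insert.hyps(2) unfolding ZS_def by auto
    have nv2: "\<And>Z z. Z \<in> ZS V (Suc j') \<Longrightarrow> z \<in> Z \<Longrightarrow> abs z \<noteq> v"
      using insert.hyps(2) unfolding ZS_def by auto
    have eq: "ZS (insert v V) (Suc j') = ZS V (Suc j') \<union> (insert v ` ZS V j' \<union> insert (-v) ` ZS V j')"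
    proof (intro equalityI subsetI)
      fix Z assume Z: "Z \<in> ZS (insert v V) (Suc j')"
      have fZ: "finite Z" and ij: "inj_on abs Z" and aZ: "abs ` Z \<subseteq> insert v V" and cZ: "card Z = Suc j'"
        using Z unfolding ZS_def by auto
      show "Z \<in> ZS V (Suc j') \<union> (insert v ` ZS V j' \<union> insert (-v) ` ZS V j')"
      proof (cases "v \<in> Z \<or> -v \<in> Z")
        case False
        have "abs ` Z \<subseteq> V"
        proof
          fix y assume "y \<in> abs ` Z"
          then obtain z where z: "z \<in> Z" "y = abs z" by blast
          have "abs z \<noteq> v" using False z(1) by (cases "z \<ge> 0") auto
          then show "y \<in> V" using aZ z by auto
        qed
        then have "Z \<in> ZS V (Suc j')" unfolding ZS_def using fZ ij cZ by auto
        then show ?thesis by blast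
      next
        case True
        then obtain u where u: "u \<in> Z" "abs u = v" by (metis abs_minus_cancel abs_of_pos v)
        have "abs ` (Z - {u}) \<subseteq> V"
        proof
          fix y assume "y \<in> abs ` (Z - {u})"
          then obtain z where z: "z \<in> Z" "z \<noteq> u" "y = abs z" by blast
          have "abs z \<noteq> abs u" using ij z u(1) by (meson inj_on_def)
          then show "y \<in> V" using aZ z u by auto
        qed
        moreover have "inj_on abs (Z - {u})" using ij by (rule inj_on_subset) auto
        moreover have "card (Z - {u}) = j'" using cZ u fZ by simp
        ultimately have Zu: "Z - {u} \<in> ZS V j'" unfolding ZS_def using fZ by auto
        have "Z = insert u (Z - {u})" using u by auto
        moreover have "u = v \<or> u = -v" using u v by auto
        ultimately show ?thesis using Zu by blast
      qed
    next
      fix Z assume Z: "Z \<in> ZS V (Suc j') \<union> (insert v ` ZS V j' \<union> insert (-v) ` ZS V j')"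
      show "Z \<in> ZS (insert v V) (Suc j')"
      proof (cases "Z \<in> ZS V (Suc j')")
        case True then show ?thesis unfolding ZS_def by auto
      next
        case False
        then obtain Y u where Y: "Y \<in> ZS V j'" and u: "u = v \<or> u = -v" and Zd: "Z = insert u Y" using Z by blast
        have fY: "finite Y" and ij: "inj_on abs Y" and aY: "abs ` Y \<subseteq> V" and cY: "card Y = j'"
          using Y unfolding ZS_def by auto
        have au: "abs u = v" using u v by auto
        have uY: "u \<notin> Y" using aY au insert.hyps(2) by auto
        have "inj_on abs (insert u Y)" using ij aY au insert.hyps(2) by auto
        moreover have "abs ` insert u Y \<subseteq> insert v V" using aY au by auto
        moreover have "card (insert u Y) = Suc j'" using fY uY cY by simp
        ultimately show ?thesis unfolding ZS_def Zd using fY by auto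
      qed
    qed
    have d1: "ZS V (Suc j') \<inter> (insert v ` ZS V j' \<union> insert (-v) ` ZS V j') = {}"
      using nv2 v by fastforce
    have d2: "insert v ` ZS V j' \<inter> insert (-v) ` ZS V j' = {}"
    proof (rule ccontr)
      assume "insert v ` ZS V j' \<inter> insert (-v) ` ZS V j' \<noteq> {}"
      then obtain Y1 Y2 where Y: "Y1 \<in> ZS V j'" "Y2 \<in> ZS V j'" "insert v Y1 = insert (-v) Y2" by blast
      then have "v \<in> Y2" using v by (metis insertCI insertE neg_equal_iff_equal neg_less_0_iff_less not_less_iff_gr_or_eq less_asym)
      then have "abs v \<noteq> v" using nv[OF Y(2)] by blast
      then show False using v by simp
    qed
    have i1: "inj_on (insert v) (ZS V j')"
    proof (rule inj_onI)
      fix Y1 Y2 assume "Y1 \<in> ZS V j'" "Y2 \<in> ZS V j'" "insert v Y1 = insert v Y2"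
      moreover have "v \<notin> Y1" "v \<notin> Y2" using nv calculation(1,2) v by fastforce+
      ultimately show "Y1 = Y2" by (metis Diff_insert_absorb)
    qed
    have i2: "inj_on (insert (-v)) (ZS V j')"
    proof (rule inj_onI)
      fix Y1 Y2 assume "Y1 \<in> ZS V j'" "Y2 \<in> ZS V j'" "insert (-v) Y1 = insert (-v) Y2"
      moreover have "-v \<notin> Y1" "-v \<notin> Y2" using nv calculation(1,2) v by fastforce+
      ultimately show "Y1 = Y2" by (metis Diff_insert_absorb)
    qed
    have fz: "\<And>i. finite (ZS V i)" using finite_ZS[OF insert.hyps(1)] .
    have "card (ZS (insert v V) (Suc j')) = card (ZS V (Suc j')) + (card (insert v ` ZS V j') + card (insert (-v) ` ZS V j'))"
      unfolding eq using d1 d2 fz by (simp add: card_Un_disjoint)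
    also have "\<dots> = card (ZS V (Suc j')) + 2 * card (ZS V j')"
      using card_image[OF i1] card_image[OF i2] by simp
    also have "\<dots> = (card V choose Suc j') * 2 ^ Suc j' + 2 * ((card V choose j') * 2 ^ j')"
      using insert.IH[OF posV] by simp
    also have "\<dots> = (Suc (card V) choose Suc j') * 2 ^ Suc j'"
      by (simp add: algebra_simps)
    finally show ?thesis using Suc insert.hyps by simp
  qed
qed

definition Fm :: "nat \<Rightarrow> nat set \<Rightarrow> nat" where
  "Fm k T = cnt {1..int k} T"

lemma W_facts: "finite {1..int k}" "{1..int k} \<subseteq> {0<..}" "card {1..int k} = k"
  by auto

lemma Fm_empty: "Fm k {} = 1"
  unfolding Fm_def by (rule cnt_empty) auto

lemma cnt_step:
  assumes fin: "finite V" and pos: "V \<subseteq> {0<..}" and bk: "b < card V" and A: "A \<subseteq> {..<b}"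
    and IH: "\<And>W. finite W \<Longrightarrow> W \<subseteq> {0<..} \<Longrightarrow> A \<subseteq> {..<card W} \<Longrightarrow> cnt W A = Fm (card W) A"
  shows "cnt V (insert b A) = (card V choose (card V - b)) * 2 ^ (card V - b) * Fm b A"
proof -
  have "cnt V (insert b A) = (\<Sum>Z\<in>ZS V (card V - b). cnt (V - abs ` Z) A)"
    by (rule cnt_rec[OF fin pos bk A])
  also have "\<dots> = (\<Sum>Z\<in>ZS V (card V - b). Fm b A)"
  proof (rule sum.cong[OF refl])
    fix Z assume Z: "Z \<in> ZS V (card V - b)"
    have fZ: "finite Z" and ij: "inj_on abs Z" and aZ: "abs ` Z \<subseteq> V" and cZ: "card Z = card V - b"
      using Z unfolding ZS_def by auto
    have "card (V - abs ` Z) = card V - card (abs ` Z)" using card_Diff_subset[OF finite_imageI[OF fZ] aZ] .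
    also have "\<dots> = b" using card_image[OF ij] cZ bk by simp
    finally have c: "card (V - abs ` Z) = b" .
    have "cnt (V - abs ` Z) A = Fm (card (V - abs ` Z)) A"
      by (rule IH) (use fin pos c A in auto)
    then show "cnt (V - abs ` Z) A = Fm b A" using c by simp
  qed
  also have "\<dots> = card (ZS V (card V - b)) * Fm b A" by simp
  also have "\<dots> = (card V choose (card V - b)) * 2 ^ (card V - b) * Fm b A"
    using ZS_card[OF fin pos] by simp
  finally show ?thesis .
qed

lemma cnt_Fm:
  assumes "finite T"
  shows "\<forall>V::int set. finite V \<and> V \<subseteq> {0<..} \<and> T \<subseteq> {..<card V} \<longrightarrow> cnt V T = Fm (card V) T"
  using assms
proof (induction T rule: finite_linorder_max_induct)
  case empty
  then show ?case using cnt_empty Fm_empty by auto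
next
  case (insert b A)
  show ?case
  proof (intro allI impI)
    fix V :: "int set" assume V: "finite V \<and> V \<subseteq> {0<..} \<and> insert b A \<subseteq> {..<card V}"
    have bk: "b < card V" using V by auto
    have A: "A \<subseteq> {..<b}" using insert.hyps by auto
    have IH: "\<And>W. finite W \<Longrightarrow> W \<subseteq> {0<..} \<Longrightarrow> A \<subseteq> {..<card W} \<Longrightarrow> cnt W A = Fm (card W) A"
      using insert.IH by blast
    have "cnt V (insert b A) = (card V choose (card V - b)) * 2 ^ (card V - b) * Fm b A"
      using cnt_step[OF _ _ bk A IH] V by blast
    moreover have "cnt {1..int (card V)} (insert b A) = (card V choose (card V - b)) * 2 ^ (card V - b) * Fm b A"
      using cnt_step[of "{1..int (card V)}" b A, OF W_facts(1,2) _ A IH] bk by simp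
    ultimately show "cnt V (insert b A) = Fm (card V) (insert b A)" unfolding Fm_def by simp
  qed
qed

lemma Fm_rec:
  assumes bk: "b < k" and A: "A \<subseteq> {..<b}"
  shows "Fm k (insert b A) = (k choose b) * 2 ^ (k - b) * Fm b A"
proof -
  have fA: "finite A" using A finite_subset by blast
  have IH: "\<And>W. finite W \<Longrightarrow> W \<subseteq> {0<..} \<Longrightarrow> A \<subseteq> {..<card W} \<Longrightarrow> cnt W A = Fm (card W) A"
    using cnt_Fm[OF fA] by blast
  have "Fm k (insert b A) = (k choose (k - b)) * 2 ^ (k - b) * Fm b A"
    unfolding Fm_def[of k] using cnt_step[of "{1..int k}" b A, OF W_facts(1,2) _ A IH] bk by simp
  then show ?thesis using binomial_symmetric[of b k] bk by simp
qed

lemma Fm_mod_zero: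
  assumes p: "prime p" and fT: "finite T"
  shows "\<forall>n. p ^ d dvd n \<longrightarrow> T \<subseteq> {..<n} \<longrightarrow> (\<exists>x\<in>T. \<not> p ^ d dvd x) \<longrightarrow> Fm n T mod p = 0"
  using fT
proof (induction T rule: finite_linorder_max_induct)
  case empty then show ?case by simp
next
  case (insert b A)
  show ?case
  proof (intro allI impI)
    fix n assume qn: "p ^ d dvd n" and sub: "insert b A \<subseteq> {..<n}" and ex: "\<exists>x\<in>insert b A. \<not> p ^ d dvd x"
    have bn: "b < n" using sub by auto
    have A: "A \<subseteq> {..<b}" using insert.hyps by auto
    have e: "Fm n (insert b A) = (n choose b) * 2 ^ (n - b) * Fm b A" by (rule Fm_rec[OF bn A])
    show "Fm n (insert b A) mod p = 0"
    proof (cases "p ^ d dvd b")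
      case False
      obtain a where a: "n = a * p ^ d" using qn by (metis dvd_def mult.commute)
      have "(n choose b) mod p = 0" using choose_mult_pp[OF p, of a d b] False a by simp
      then show ?thesis unfolding e by (simp add: mod_mult_left_eq[symmetric] mult.assoc)
    next
      case True
      then have "\<exists>x\<in>A. \<not> p ^ d dvd x" using ex by auto
      then have "Fm b A mod p = 0" using insert.IH True A by blast
      then show ?thesis unfolding e by (simp add: mod_mult_right_eq[symmetric])
    qed
  qed
qed

lemma Fm_mod_scale:
  assumes p: "prime p" and op: "odd p" and fT: "finite T"
  shows "\<forall>n. p ^ d dvd n \<longrightarrow> (\<lambda>s. p ^ d * s) ` T \<subseteq> {..<n} \<longrightarrow> Fm n ((\<lambda>s. p ^ d * s) ` T) mod p = Fm (n div p ^ d) T mod p"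
  using fT
proof (induction T rule: finite_linorder_max_induct)
  case empty then show ?case by (simp add: Fm_empty)
next
  case (insert b A)
  let ?q = "p ^ d"
  have q0: "?q > 0" using p prime_gt_0_nat by simp
  show ?case
  proof (intro allI impI)
    fix n assume qn: "?q dvd n" and sub: "(\<lambda>s. ?q * s) ` insert b A \<subseteq> {..<n}"
    obtain a where a: "n = a * ?q" using qn by (metis dvd_def mult.commute)
    have bn: "?q * b < n" using sub by auto
    then have ba: "b < a" using a q0 by (simp add: mult.commute)
    have A: "A \<subseteq> {..<b}" using insert.hyps by auto
    have A': "(\<lambda>s. ?q * s) ` A \<subseteq> {..<?q * b}" using A q0 by auto
    have e1: "Fm n ((\<lambda>s. ?q * s) ` insert b A) = (n choose (?q * b)) * 2 ^ (n - ?q * b) * Fm (?q * b) ((\<lambda>s. ?q * s) ` A)"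
      using Fm_rec[OF bn A'] by simp
    have e2: "Fm a (insert b A) = (a choose b) * 2 ^ (a - b) * Fm b A" by (rule Fm_rec[OF ba A])
    have c1: "(n choose (?q * b)) mod p = (a choose b) mod p"
      using choose_mult_pp[OF p, of a d "?q * b"] a q0 prime_gt_0_nat[OF p] by simp
    have "n - ?q * b = ?q * (a - b)" using a by (simp add: algebra_simps diff_mult_distrib)
    then have c2: "2 ^ (n - ?q * b) mod p = 2 ^ (a - b) mod p" using pow2_pp[OF p op, of d "a - b"] by simp
    have c3: "Fm (?q * b) ((\<lambda>s. ?q * s) ` A) mod p = Fm b A mod p"
      using insert.IH A' q0 by simp
    have "Fm n ((\<lambda>s. ?q * s) ` insert b A) mod p = Fm a (insert b A) mod p"
      unfolding e1 e2 by (intro mod_mult_cong c1 c2 c3)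
    then show "Fm n ((\<lambda>s. ?q * s) ` insert b A) mod p = Fm (n div ?q) (insert b A) mod p"
      using a q0 by simp
  qed
qed

definition ex :: "int set \<Rightarrow> nat set \<Rightarrow> nat" where
  "ex V S = card {xs \<in> SA V. Dl xs = S}"

lemma cnt_as_sum:
  assumes fin: "finite V" and fS: "finite S"
  shows "int (cnt V S) = (\<Sum>T\<in>Pow S. int (ex V T))"
proof -
  have eq: "{xs \<in> SA V. Dl xs \<subseteq> S} = (\<Union>T\<in>Pow S. {xs \<in> SA V. Dl xs = T})" by auto
  have "cnt V S = (\<Sum>T\<in>Pow S. ex V T)"
    unfolding cnt_def ex_def eq
    by (rule card_UN_disjoint) (use fS finite_SA[OF fin] in auto)
  then show ?thesis by simp
qed

lemma ex_IE:
  assumes fin: "finite V" and fS: "finite S"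
  shows "int (ex V S) = (\<Sum>T\<in>Pow S. (-1) ^ (card S - card T) * int (cnt V T))"
  by (rule inclusion_exclusion_mobius[where f = "\<lambda>S. int (ex V S)"]) (use cnt_as_sum[OF fin] fS in auto)

lemma cnt_W: "cnt {1..int n} T = Fm n T" unfolding Fm_def ..

lemma ex_IE_W:
  assumes "finite S"
  shows "int (ex {1..int n} S) = (\<Sum>T\<in>Pow S. (-1) ^ (card S - card T) * int (Fm n T))"
  using ex_IE[of "{1..int n}" S] assms by (simp add: cnt_W)

lemma nat_mod_to_int_cong: "a mod p = b mod p \<Longrightarrow> [int a = int b] (mod int p)"
  by (metis cong_def cong_int_iff)

lemma main_cong:
  assumes p: "prime p" and op: "odd p" and n: "n = m * p ^ d"
    and S0: "S0 \<subseteq> {..<m}" and E: "E \<subseteq> {x. x < n \<and> \<not> p ^ d dvd x}"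
  shows "[int (ex {1..int n} ((\<lambda>s. p ^ d * s) ` S0 \<union> E)) = (-1) ^ card E * int (ex {1..int m} S0)] (mod int p)"
proof -
  let ?q = "p ^ d"
  let ?f = "\<lambda>s. ?q * s"
  define S where "S = ?f ` S0 \<union> E"
  have q0: "?q > 0" using p prime_gt_0_nat by simp
  have injf: "inj ?f" using q0 by (auto intro: inj_onI)
  have fS0: "finite S0" using S0 finite_subset by blast
  have fE: "finite E" using E by (rule finite_subset) auto
  have Sn: "S \<subseteq> {..<n}" unfolding S_def using S0 E n q0 by (auto simp: mult.commute)
  have fS: "finite S" using Sn finite_subset by blast
  have disj: "?f ` S0 \<inter> E = {}" using E by auto
  have cS: "card S = card S0 + card E"
    unfolding S_def using card_Un_disjoint[OF finite_imageI[OF fS0] fE disj] card_image[OF inj_on_subset[OF injf]] by simp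
  define P1 where "P1 = {T \<in> Pow S. T \<inter> E = {}}"
  define P2 where "P2 = {T \<in> Pow S. T \<inter> E \<noteq> {}}"
  let ?g = "\<lambda>T. (-1::int) ^ (card S - card T) * int (Fm n T)"
  have "int (ex {1..int n} S) = sum ?g (Pow S)" using ex_IE_W[OF fS] .
  also have "Pow S = P1 \<union> P2" unfolding P1_def P2_def by auto
  also have "sum ?g (P1 \<union> P2) = sum ?g P1 + sum ?g P2"
    by (rule sum.union_disjoint) (use fS in \<open>auto simp: P1_def P2_def\<close>)
  finally have e1: "int (ex {1..int n} S) = sum ?g P1 + sum ?g P2" .
  have z: "[sum ?g P2 = sum (\<lambda>T. 0) P2] (mod int p)"
  proof (rule cong_sum)
    fix T assume T: "T \<in> P2"
    then obtain x where x: "x \<in> T" "x \<in> E" unfolding P2_def by auto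
    have TS: "T \<subseteq> S" using T unfolding P2_def by auto
    have h: "\<forall>n. p ^ d dvd n \<longrightarrow> T \<subseteq> {..<n} \<longrightarrow> (\<exists>x\<in>T. \<not> p ^ d dvd x) \<longrightarrow> Fm n T mod p = 0"
      using Fm_mod_zero[OF p finite_subset[OF TS fS], of d] .
    have h1: "p ^ d dvd n" using n by simp
    have h2: "T \<subseteq> {..<n}" using TS Sn by auto
    have h3: "\<exists>x\<in>T. \<not> p ^ d dvd x" using x E by auto
    have "Fm n T mod p = 0" using h h1 h2 h3 by blast
    then have "[int (Fm n T) = 0] (mod int p)" using nat_mod_to_int_cong[of "Fm n T" p 0] by simp
    then have "[?g T = (-1::int) ^ (card S - card T) * 0] (mod int p)" by (intro cong_mult) auto
    then show "[?g T = 0] (mod int p)" by simp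
  qed
  have P1eq: "P1 = image ?f ` Pow S0"
  proof (intro equalityI subsetI)
    fix T assume "T \<in> P1"
    then have "T \<subseteq> ?f ` S0" unfolding P1_def S_def by auto
    then obtain T0 where "T0 \<subseteq> S0" "T = ?f ` T0" by (auto simp: subset_image_iff)
    then show "T \<in> image ?f ` Pow S0" by blast
  next
    fix T assume "T \<in> image ?f ` Pow S0"
    then show "T \<in> P1" unfolding P1_def S_def using disj by auto
  qed
  have injP: "inj_on (image ?f) (Pow S0)"
    using injf by (auto intro!: inj_onI simp: inj_image_eq_iff)
  have "sum ?g P1 = (\<Sum>T0\<in>Pow S0. ?g (?f ` T0))"
    unfolding P1eq by (rule sum.reindex[OF injP, unfolded comp_def])
  also have "[\<dots> = (\<Sum>T0\<in>Pow S0. (-1) ^ card E * ((-1) ^ (card S0 - card T0) * int (Fm m T0)))] (mod int p)"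
  proof (rule cong_sum)
    fix T0 assume T0: "T0 \<in> Pow S0"
    have cT0: "card (?f ` T0) = card T0" using card_image[OF inj_on_subset[OF injf]] by simp
    have le: "card T0 \<le> card S0" using T0 fS0 by (simp add: card_mono)
    have ex: "card S - card (?f ` T0) = card E + (card S0 - card T0)" using cS cT0 le by simp
    have sub: "?f ` T0 \<subseteq> {..<n}" using T0 S0 n q0 by (auto simp: mult.commute)
    have "Fm n (?f ` T0) mod p = Fm (n div ?q) T0 mod p"
      using Fm_mod_scale[OF p op finite_subset[OF _ fS0], of T0 d] T0 sub n by auto
    moreover have "n div ?q = m" using n q0 by simp
    ultimately have "Fm n (?f ` T0) mod p = Fm m T0 mod p" by simp
    then have c: "[int (Fm n (?f ` T0)) = int (Fm m T0)] (mod int p)" by (rule nat_mod_to_int_cong)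
    have "?g (?f ` T0) = (-1) ^ card E * (-1) ^ (card S0 - card T0) * int (Fm n (?f ` T0))"
      unfolding ex by (simp add: power_add)
    also have "[\<dots> = (-1) ^ card E * (-1) ^ (card S0 - card T0) * int (Fm m T0)] (mod int p)"
      by (intro cong_mult c cong_refl)
    finally show "[?g (?f ` T0) = (-1) ^ card E * ((-1) ^ (card S0 - card T0) * int (Fm m T0))] (mod int p)"
      by (simp add: mult.assoc)
  qed
  also have "(\<Sum>T0\<in>Pow S0. (-1) ^ card E * ((-1) ^ (card S0 - card T0) * int (Fm m T0))) = (-1) ^ card E * int (ex {1..int m} S0)"
    unfolding ex_IE_W[OF fS0] by (simp add: sum_distrib_left)
  finally have c1: "[sum ?g P1 = (-1) ^ card E * int (ex {1..int m} S0)] (mod int p)" .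
  have "[sum ?g P1 + sum ?g P2 = (-1) ^ card E * int (ex {1..int m} S0) + 0] (mod int p)"
    using cong_add[OF c1 z] by simp
  then show ?thesis using e1 unfolding S_def by simp
qed

definition phi :: "nat \<Rightarrow> (int \<Rightarrow> int) \<Rightarrow> int list" where
  "phi n w = map (\<lambda>i. w (int i)) [1..<n+1]"

lemma phi_length[simp]: "length (phi n w) = n" unfolding phi_def by simp

lemma phi_nth: "k < n \<Longrightarrow> phi n w ! k = w (int k + 1)"
  unfolding phi_def by (simp del: upt_Suc add: add.commute)

lemma sp_zero: "w \<in> signed_perms n \<Longrightarrow> w 0 = 0"
  unfolding signed_perms_def by auto

lemma sp_descents: assumes w: "w \<in> signed_perms n" shows "descents_B n w = Dl (phi n w)"
proof -
  have "\<And>i. i < n \<Longrightarrow> (0 # phi n w) ! i = w (int i)"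
  proof -
    fix i assume i: "i < n"
    show "(0 # phi n w) ! i = w (int i)"
    proof (cases i)
      case 0 then show ?thesis using sp_zero[OF w] by simp
    next
      case (Suc j) then show ?thesis using i phi_nth[of j n w] by (simp add: add.commute)
    qed
  qed
  then show ?thesis unfolding descents_B_def Dl_def using phi_nth[of _ n w] by auto
qed

lemma sp_props:
  assumes w: "w \<in> signed_perms n"
  shows "bij_betw w ({- int n..int n} - {0}) ({- int n..int n} - {0})" "\<And>i. w (-i) = - w i"
    "\<And>i. i \<notin> {- int n..int n} - {0} \<Longrightarrow> w i = i"
  using w unfolding signed_perms_def by auto

lemma phi_SA: assumes w: "w \<in> signed_perms n" shows "phi n w \<in> SA {1..int n}"
proof -
  let ?N = "{- int n..int n} - {0}"
  note bw = sp_props(1)[OF w] and od = sp_props(2)[OF w]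
  have inj: "inj_on w ?N" using bw bij_betw_def by blast
  have wN: "\<And>i. i \<in> ?N \<Longrightarrow> w i \<in> ?N" using bw bij_betwE by blast
  let ?g = "\<lambda>i::nat. abs (w (int i))"
  have mp: "map abs (phi n w) = map ?g [1..<n+1]" unfolding phi_def by simp
  have ig: "inj_on ?g {1..<n+1}"
  proof (rule inj_onI)
    fix a b assume a: "a \<in> {1..<n+1}" and b: "b \<in> {1..<n+1}" and e: "?g a = ?g b"
    have aN: "int a \<in> ?N" and bN: "int b \<in> ?N" and mbN: "- int b \<in> ?N" using a b by auto
    show "a = b"
    proof (cases "w (int a) = w (int b)")
      case True
      have "int a = int b" using inj aN bN True by (meson inj_onD)
      then show ?thesis by simp
    next
      case False
      then have "w (int a) = - w (int b)" using e by (auto simp: abs_if split: if_splits)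
      then have "w (int a) = w (- int b)" using od by simp
      then have "int a = - int b" using inj aN mbN by (meson inj_onD)
      then show ?thesis using a b by simp
    qed
  qed
  have "distinct (map abs (phi n w))" unfolding mp using ig by (simp del: upt_Suc add: distinct_map)
  moreover have "set (map abs (phi n w)) = {1..int n}"
  proof -
    have s: "set (map abs (phi n w)) = ?g ` {1..<n+1}" unfolding mp by (simp del: upt_Suc)
    have sub: "?g ` {1..<n+1} \<subseteq> {1..int n}"
    proof
      fix y assume "y \<in> ?g ` {1..<n+1}"
      then obtain a where a: "a \<in> {1..<n+1}" "y = ?g a" by blast
      then have "w (int a) \<in> ?N" using wN by auto
      then show "y \<in> {1..int n}" using a by auto
    qed
    have "card (?g ` {1..<n+1}) = card {1..int n}" using card_image[OF ig] by simp
    then show ?thesis using s sub by (simp add: card_subset_eq)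
  qed
  ultimately show ?thesis unfolding SA_def by blast
qed

lemma phi_inj: "inj_on (phi n) (signed_perms n)"
proof (rule inj_onI)
  fix w1 w2 assume w1: "w1 \<in> signed_perms n" and w2: "w2 \<in> signed_perms n" and e: "phi n w1 = phi n w2"
  have pos: "\<And>i. 1 \<le> i \<Longrightarrow> i \<le> int n \<Longrightarrow> w1 i = w2 i"
  proof -
    fix i :: int assume i: "1 \<le> i" "i \<le> int n"
    then have "nat i - 1 < n" by simp
    then have "phi n w1 ! (nat i - 1) = phi n w2 ! (nat i - 1)" using e by simp
    then show "w1 i = w2 i" using phi_nth[of "nat i - 1" n] i by simp
  qed
  show "w1 = w2"
  proof
    fix i
    show "w1 i = w2 i"
    proof (cases "i \<in> {- int n..int n} - {0}")
      case False then show ?thesis using sp_props(3)[OF w1] sp_props(3)[OF w2] by simp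
    next
      case True
      show ?thesis
      proof (cases "i > 0")
        case True then show ?thesis using pos \<open>i \<in> _\<close> by simp
      next
        case False
        then have "w1 (-i) = w2 (-i)" using pos \<open>i \<in> _\<close> by simp
        then show ?thesis using sp_props(2)[OF w1, of "-i"] sp_props(2)[OF w2, of "-i"] by simp
      qed
    qed
  qed
qed

definition psi :: "nat \<Rightarrow> int list \<Rightarrow> int \<Rightarrow> int" where
  "psi n xs i = (if 1 \<le> i \<and> i \<le> int n then xs ! (nat i - 1)
     else if - int n \<le> i \<and> i \<le> -1 then - (xs ! (nat (-i) - 1)) else i)"
lemma psi_pos: "1 \<le> i \<Longrightarrow> i \<le> int n \<Longrightarrow> psi n xs i = xs ! (nat i - 1)"
  by (simp add: psi_def)
lemma psi_neg: "- int n \<le> i \<Longrightarrow> i \<le> -1 \<Longrightarrow> psi n xs i = - (xs ! (nat (-i) - 1))"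
  by (simp add: psi_def)
lemma psi_out: "i \<notin> {- int n..int n} - {0} \<Longrightarrow> psi n xs i = i"
proof -
  assume "i \<notin> {- int n..int n} - {0}"
  then have h1: "\<not> (1 \<le> i \<and> i \<le> int n)" and h2: "\<not> (- int n \<le> i \<and> i \<le> -1)" by auto
  show ?thesis unfolding psi_def by (subst if_not_P[OF h1], subst if_not_P[OF h2], rule refl)
qed
lemma psi_odd: "psi n xs (-i) = - psi n xs i"
proof (cases "1 \<le> i \<and> i \<le> int n")
  case True then show ?thesis using psi_pos[of i n xs] psi_neg[of n "-i" xs] by simp
next
  case F1: False
  show ?thesis
  proof (cases "- int n \<le> i \<and> i \<le> -1")
    case True then show ?thesis using psi_neg[of n i xs] psi_pos[of "-i" n xs] by simp
  next
    case False
    then have "i \<notin> {- int n..int n} - {0}" "-i \<notin> {- int n..int n} - {0}" using F1 by auto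
    then show ?thesis using psi_out by simp
  qed
qed
lemma psi_abs: "i \<in> {- int n..int n} - {0} \<Longrightarrow> abs (psi n xs i) = abs (xs ! (nat (abs i) - 1))"
proof -
  assume i: "i \<in> {- int n..int n} - {0}"
  show ?thesis
  proof (cases "i > 0")
    case True then show ?thesis using psi_pos[of i n xs] i by simp
  next
    case False then show ?thesis using psi_neg[of n i xs] i by simp
  qed
qed

lemma absN: "1 \<le> \<bar>y::int\<bar> \<Longrightarrow> \<bar>y\<bar> \<le> int n \<Longrightarrow> y \<in> {-int n..int n} - {0}"
  by (cases "y \<ge> 0") auto
lemma absnat: "(i::int) \<noteq> 0 \<Longrightarrow> (j::int) \<noteq> 0 \<Longrightarrow> nat \<bar>i\<bar> - 1 = nat \<bar>j\<bar> - 1 \<Longrightarrow> \<bar>i\<bar> = \<bar>j\<bar>"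
  by arith
lemma inN_lt: "(i::int) \<in> {-int n..int n} - {0} \<Longrightarrow> nat \<bar>i\<bar> - 1 < n"
  by (cases "i \<ge> 0") auto

lemma psi_props:
  assumes xs: "xs \<in> SA {1..int n}"
  shows "psi n xs \<in> signed_perms n" "phi n (psi n xs) = xs"
proof -
  let ?N = "{- int n..int n} - {0}"
  have lx: "length xs = n" using SA_length[OF xs] by simp
  have dx: "distinct (map abs xs)" and sx: "set (map abs xs) = {1..int n}" using xs unfolding SA_def by auto
  have av: "\<And>k. k < n \<Longrightarrow> abs (xs ! k) \<in> {1..int n}"
  proof -
    fix k assume k: "k < n"
    have m: "map abs xs ! k \<in> set (map abs xs)" using k lx by (intro nth_mem) simp
    have eq: "map abs xs ! k = abs (xs ! k)" using k lx by simp
    show "abs (xs ! k) \<in> {1..int n}" using m sx eq by metis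
  qed
  have ai: "\<And>i. i \<in> ?N \<Longrightarrow> abs (psi n xs i) = abs (xs ! (nat (abs i) - 1))"
    by (rule psi_abs)
  have inN: "\<And>i. i \<in> ?N \<Longrightarrow> psi n xs i \<in> ?N"
  proof -
    fix i assume i: "i \<in> ?N"
    have "nat (abs i) - 1 < n" using i by (rule inN_lt)
    then have "abs (psi n xs i) \<in> {1..int n}" using ai[OF i] av by simp
    then show "psi n xs i \<in> ?N" by (intro absN) simp_all
  qed
  have odd: "\<And>i. psi n xs (-i) = - psi n xs i" by (rule psi_odd)
  have inj: "inj_on (psi n xs) ?N"
  proof (rule inj_onI)
    fix i j assume i: "i \<in> ?N" and j: "j \<in> ?N" and e: "psi n xs i = psi n xs j"
    have ki: "nat (abs i) - 1 < n" and kj: "nat (abs j) - 1 < n" using inN_lt[OF i] inN_lt[OF j] by simp_all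
    have "abs (xs ! (nat (abs i) - 1)) = abs (psi n xs i)" using ai[OF i] by simp
    also have "\<dots> = abs (psi n xs j)" using e by simp
    also have "\<dots> = abs (xs ! (nat (abs j) - 1))" using ai[OF j] .
    finally have "map abs xs ! (nat (abs i) - 1) = map abs xs ! (nat (abs j) - 1)"
      using ki kj lx by simp
    then have "nat (abs i) - 1 = nat (abs j) - 1"
      using nth_eq_iff_index_eq[OF dx, of "nat (abs i) - 1" "nat (abs j) - 1"] ki kj lx by simp
    moreover have "i \<noteq> 0" "j \<noteq> 0" using i j by auto
    ultimately have aij: "abs i = abs j" using absnat by blast
    show "i = j"
    proof (rule ccontr)
      assume "i \<noteq> j"
      then have "j = - i" using aij abs_eq_iff[of j i] by auto
      then have "psi n xs j = - psi n xs i" using odd[of i] by simp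
      then have "psi n xs i = - psi n xs i" using e by simp
      then have "psi n xs i = 0" by simp
      then show False using inN[OF i] by simp
    qed
  qed
  have "psi n xs ` ?N = ?N"
  proof -
    have sub: "psi n xs ` ?N \<subseteq> ?N"
    proof (rule image_subsetI)
      fix i assume "i \<in> ?N" then show "psi n xs i \<in> ?N" by (rule inN)
    qed
    have c: "card (psi n xs ` ?N) = card ?N" using card_image[OF inj] .
    have fin: "finite ?N" by (rule finite_Diff) simp
    show ?thesis by (rule card_subset_eq[OF fin sub c])
  qed
  then have bij: "bij_betw (psi n xs) ?N ?N" using inj unfolding bij_betw_def by blast
  have "bij_betw (psi n xs) ?N ?N \<and> (\<forall>i. psi n xs (- i) = - psi n xs i) \<and> (\<forall>i. i \<notin> ?N \<longrightarrow> psi n xs i = i)"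
    using bij odd psi_out by blast
  then show "psi n xs \<in> signed_perms n" unfolding signed_perms_def mem_Collect_eq .
  show "phi n (psi n xs) = xs"
  proof (rule nth_equalityI)
    show "length (phi n (psi n xs)) = length xs" using lx by simp
    fix k assume "k < length (phi n (psi n xs))"
    then have k: "k < n" by simp
    have "phi n (psi n xs) ! k = psi n xs (int k + 1)" using phi_nth[OF k] .
    also have "\<dots> = xs ! (nat (int k + 1) - 1)" using k by (intro psi_pos) auto
    also have "\<dots> = xs ! k" proof - have e: "nat (int k + 1) - 1 = k" by arith then show ?thesis by (simp only: e) qed
    finally show "phi n (psi n xs) ! k = xs ! k" .
  qed
qed

lemma sp_count: "card {w \<in> signed_perms n. descents_B n w = S} = ex {1..int n} S"
proof -
  have "bij_betw (phi n) {w \<in> signed_perms n. descents_B n w = S} {xs \<in> SA {1..int n}. Dl xs = S}"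
  proof (rule bij_betw_imageI)
    show "inj_on (phi n) {w \<in> signed_perms n. descents_B n w = S}"
      using phi_inj by (rule inj_on_subset) auto
    show "phi n ` {w \<in> signed_perms n. descents_B n w = S} = {xs \<in> SA {1..int n}. Dl xs = S}"
    proof (intro equalityI subsetI)
      fix xs assume "xs \<in> phi n ` {w \<in> signed_perms n. descents_B n w = S}"
      then obtain w where "w \<in> signed_perms n" "descents_B n w = S" "xs = phi n w" by blast
      then show "xs \<in> {xs \<in> SA {1..int n}. Dl xs = S}" using phi_SA sp_descents by auto
    next
      fix xs assume "xs \<in> {xs \<in> SA {1..int n}. Dl xs = S}"
      then have xs: "xs \<in> SA {1..int n}" and D: "Dl xs = S" by auto
      have "psi n xs \<in> signed_perms n" "phi n (psi n xs) = xs" using psi_props[OF xs] by auto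
      moreover then have "descents_B n (psi n xs) = S" using sp_descents D by metis
      ultimately show "xs \<in> phi n ` {w \<in> signed_perms n. descents_B n w = S}" by (metis (mono_tags, lifting) image_eqI mem_Collect_eq)
    qed
  qed
  then show ?thesis unfolding ex_def by (rule bij_betw_same_card)
qed

lemma ribbon_ex: "ribbonB \<alpha> = ex {1..int (sum_list \<alpha>)} (comp_descents \<alpha>)"
  unfolding ribbonB_def by (rule sp_count)

lemma cd_single: "comp_descents [a] = {}"
  unfolding comp_descents_def by auto

lemma cd_snoc:
  assumes "\<alpha> \<noteq> []"
  shows "comp_descents (\<alpha> @ [x]) = insert (sum_list \<alpha>) (comp_descents \<alpha>)"
proof -
  have L: "length \<alpha> \<ge> 1" using assms by (cases \<alpha>) auto
  have t: "\<And>k. k \<le> length \<alpha> \<Longrightarrow> take k (\<alpha> @ [x]) = take k \<alpha>" by simp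
  show ?thesis
  proof (intro equalityI subsetI)
    fix y assume "y \<in> comp_descents (\<alpha> @ [x])"
    then obtain k where k: "1 \<le> k" "k < length \<alpha> + 1" "y = sum_list (take k (\<alpha> @ [x]))"
      unfolding comp_descents_def by auto
    show "y \<in> insert (sum_list \<alpha>) (comp_descents \<alpha>)"
    proof (cases "k = length \<alpha>")
      case True then show ?thesis using k t by simp
    next
      case False
      then have "k < length \<alpha>" using k by simp
      then show ?thesis using k t unfolding comp_descents_def by auto
    qed
  next
    fix y assume y: "y \<in> insert (sum_list \<alpha>) (comp_descents \<alpha>)"
    show "y \<in> comp_descents (\<alpha> @ [x])"
    proof (cases "y = sum_list \<alpha>")
      case True
      have "y = sum_list (take (length \<alpha>) (\<alpha> @ [x]))" using True by simp
      then show ?thesis unfolding comp_descents_def using L by force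
    next
      case False
      then obtain k where k: "1 \<le> k" "k < length \<alpha>" "y = sum_list (take k \<alpha>)"
        using y unfolding comp_descents_def by auto
      then have "y = sum_list (take k (\<alpha> @ [x]))" using t by simp
      then show ?thesis unfolding comp_descents_def using k by force
    qed
  qed
qed

lemma pc_snoc:
  assumes "\<alpha> \<noteq> []"
  shows "\<alpha> @ [x] \<in> pseudo_comps n \<longleftrightarrow> \<alpha> \<in> pseudo_comps (sum_list \<alpha>) \<and> x > 0 \<and> n = sum_list \<alpha> + x"
proof -
  have "tl (\<alpha> @ [x]) = tl \<alpha> @ [x]" using assms by (cases \<alpha>) auto
  then show ?thesis unfolding pseudo_comps_def using assms by auto
qed

lemma cd_lt:
  assumes "\<alpha> \<in> pseudo_comps n"
  shows "comp_descents \<alpha> \<subseteq> {..<n}"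
proof
  fix y assume "y \<in> comp_descents \<alpha>"
  then obtain k where k: "1 \<le> k" "k < length \<alpha>" "y = sum_list (take k \<alpha>)"
    unfolding comp_descents_def by auto
  have ne: "\<alpha> \<noteq> []" and pos: "\<forall>a\<in>set (tl \<alpha>). a > 0" and s: "sum_list \<alpha> = n"
    using assms unfolding pseudo_comps_def by auto
  have "drop k \<alpha> = drop (k - 1) (tl \<alpha>)" using k(1) ne by (cases \<alpha>; cases k) auto
  then have sub: "set (drop k \<alpha>) \<subseteq> set (tl \<alpha>)" by (metis set_drop_subset)
  have "drop k \<alpha> \<noteq> []" using k by simp
  then obtain a r where ar: "drop k \<alpha> = a # r" by (cases "drop k \<alpha>") auto
  then have "a > 0" using sub pos by auto
  then have "sum_list (drop k \<alpha>) > 0" using ar by simp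
  moreover have "sum_list \<alpha> = sum_list (take k \<alpha>) + sum_list (drop k \<alpha>)"
    by (metis append_take_drop_id sum_list_append)
  ultimately show "y \<in> {..<n}" using k s by simp
qed

lemma pc_ne: "\<alpha> \<in> pseudo_comps n \<Longrightarrow> \<alpha> \<noteq> []" unfolding pseudo_comps_def by auto

lemma pc_split:
  assumes "\<alpha> \<in> pseudo_comps n" "length \<alpha> \<ge> 2"
  shows "\<exists>\<alpha>' x. \<alpha> = \<alpha>' @ [x] \<and> \<alpha>' \<noteq> []"
proof -
  have "\<alpha> = butlast \<alpha> @ [last \<alpha>]" using pc_ne[OF assms(1)] by simp
  moreover have "butlast \<alpha> \<noteq> []" using assms(2) by (cases \<alpha>) auto
  ultimately show ?thesis by blast
qed

lemma cd_empty_iff: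
  assumes "\<alpha> \<in> pseudo_comps n"
  shows "comp_descents \<alpha> = {} \<longleftrightarrow> \<alpha> = [n]"
proof
  assume e: "comp_descents \<alpha> = {}"
  have "length \<alpha> < 2"
  proof (rule ccontr)
    assume "\<not> length \<alpha> < 2"
    then have "sum_list (take 1 \<alpha>) \<in> comp_descents \<alpha>" unfolding comp_descents_def by force
    then show False using e by simp
  qed
  moreover have "\<alpha> \<noteq> []" using pc_ne[OF assms] .
  ultimately obtain a where "\<alpha> = [a]" by (cases \<alpha>) (auto simp: length_Suc_conv)
  then show "\<alpha> = [n]" using assms unfolding pseudo_comps_def by simp
next
  assume "\<alpha> = [n]" then show "comp_descents \<alpha> = {}" by (simp add: cd_single)
qed

lemma len_ge2:
  assumes "\<alpha> \<in> pseudo_comps n" "comp_descents \<alpha> \<noteq> {}"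
  shows "length \<alpha> \<ge> 2"
proof (rule ccontr)
  assume "\<not> length \<alpha> \<ge> 2"
  moreover have "\<alpha> \<noteq> []" using pc_ne[OF assms(1)] .
  ultimately obtain a where "\<alpha> = [a]" by (cases \<alpha>; cases "tl \<alpha>") auto
  then show False using assms(2) cd_single by simp
qed

lemma cd_inj_aux:
  "\<forall>n \<alpha> \<beta>. length \<alpha> = L \<longrightarrow> \<alpha> \<in> pseudo_comps n \<longrightarrow> \<beta> \<in> pseudo_comps n \<longrightarrow> comp_descents \<alpha> = comp_descents \<beta> \<longrightarrow> \<alpha> = \<beta>"
proof (induction L)
  case 0 then show ?case using pc_ne by auto
next
  case (Suc L)
  show ?case
  proof (intro allI impI)
    fix n \<alpha> \<beta> assume l: "length \<alpha> = Suc L" and a: "\<alpha> \<in> pseudo_comps n" and b: "\<beta> \<in> pseudo_comps n"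
      and e: "comp_descents \<alpha> = comp_descents \<beta>"
    show "\<alpha> = \<beta>"
    proof (cases "comp_descents \<alpha> = {}")
      case True
      then show ?thesis using e cd_empty_iff[OF a] cd_empty_iff[OF b] by simp
    next
      case False
      then have la: "length \<alpha> \<ge> 2" by (rule len_ge2[OF a])
      have False2: "comp_descents \<beta> \<noteq> {}" using False e by simp
      then have lb: "length \<beta> \<ge> 2" by (rule len_ge2[OF b])
      obtain \<alpha>' x where ax: "\<alpha> = \<alpha>' @ [x]" "\<alpha>' \<noteq> []" using pc_split[OF a la] by blast
      obtain \<beta>' y where bq: "\<beta> = \<beta>' @ [y]" "\<beta>' \<noteq> []" using pc_split[OF b lb] by blast
      have a': "\<alpha>' \<in> pseudo_comps (sum_list \<alpha>')" and xa: "n = sum_list \<alpha>' + x" using pc_snoc[OF ax(2)] a ax(1) by auto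
      have b': "\<beta>' \<in> pseudo_comps (sum_list \<beta>')" and yb: "n = sum_list \<beta>' + y" using pc_snoc[OF bq(2)] b bq(1) by auto
      have ca: "comp_descents \<alpha> = insert (sum_list \<alpha>') (comp_descents \<alpha>')" using cd_snoc[OF ax(2)] ax(1) by simp
      have cb: "comp_descents \<beta> = insert (sum_list \<beta>') (comp_descents \<beta>')" using cd_snoc[OF bq(2)] bq(1) by simp
      have la': "comp_descents \<alpha>' \<subseteq> {..<sum_list \<alpha>'}" using cd_lt[OF a'] .
      have lb': "comp_descents \<beta>' \<subseteq> {..<sum_list \<beta>'}" using cd_lt[OF b'] .
      have "sum_list \<alpha>' = sum_list \<beta>'"
      proof (rule ccontr)
        assume ne: "sum_list \<alpha>' \<noteq> sum_list \<beta>'"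
        have "sum_list \<alpha>' \<in> comp_descents \<beta>" using ca e by auto
        then have "sum_list \<alpha>' < sum_list \<beta>'" using cb lb' ne by auto
        moreover have "sum_list \<beta>' \<in> comp_descents \<alpha>" using cb e by auto
        then have "sum_list \<beta>' < sum_list \<alpha>'" using ca la' ne by auto
        ultimately show False by simp
      qed
      moreover have "comp_descents \<alpha>' = comp_descents \<beta>'"
      proof -
        have "comp_descents \<alpha>' = comp_descents \<alpha> - {sum_list \<alpha>'}" using ca la' by auto
        also have "\<dots> = comp_descents \<beta> - {sum_list \<beta>'}" using e calculation \<open>sum_list \<alpha>' = sum_list \<beta>'\<close> by simp
        also have "\<dots> = comp_descents \<beta>'" using cb lb' by auto
        finally show ?thesis .
      qed
      moreover have "length \<alpha>' = L" using l ax by simp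
      ultimately have "\<alpha>' = \<beta>'" using Suc.IH a' b' by metis
      moreover have "x = y" using xa yb \<open>sum_list \<alpha>' = sum_list \<beta>'\<close> by simp
      ultimately show ?thesis using ax bq by simp
    qed
  qed
qed

lemma cd_surj: "S \<subseteq> {..<n} \<Longrightarrow> \<exists>\<alpha>\<in>pseudo_comps n. comp_descents \<alpha> = S"
proof (induction n arbitrary: S rule: less_induct)
  case (less n)
  show ?case
  proof (cases "S = {}")
    case True
    have "[n] \<in> pseudo_comps n" unfolding pseudo_comps_def by simp
    then show ?thesis using True cd_single by blast
  next
    case False
    have fS: "finite S" using less.prems finite_subset by blast
    define s where "s = Max S"
    have sS: "s \<in> S" using fS False s_def by simp
    have sn: "s < n" using sS less.prems by auto
    have S': "S - {s} \<subseteq> {..<s}" using fS s_def by (auto intro: Max_ge le_neq_trans)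
    obtain \<alpha>' where a': "\<alpha>' \<in> pseudo_comps s" "comp_descents \<alpha>' = S - {s}" using less.IH[OF sn S'] by blast
    have ne: "\<alpha>' \<noteq> []" using pc_ne[OF a'(1)] .
    have ss: "sum_list \<alpha>' = s" using a'(1) unfolding pseudo_comps_def by simp
    have "\<alpha>' @ [n - s] \<in> pseudo_comps n" using pc_snoc[OF ne] a'(1) ss sn by simp
    moreover have "comp_descents (\<alpha>' @ [n - s]) = S" using cd_snoc[OF ne] a'(2) ss sS by auto
    ultimately show ?thesis by blast
  qed
qed

lemma cd_bij: "bij_betw comp_descents (pseudo_comps n) (Pow {..<n})"
proof (rule bij_betw_imageI)
  show "inj_on comp_descents (pseudo_comps n)"
  proof (rule inj_onI)
    fix \<alpha> \<beta> assume "\<alpha> \<in> pseudo_comps n" "\<beta> \<in> pseudo_comps n" "comp_descents \<alpha> = comp_descents \<beta>"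
    then show "\<alpha> = \<beta>" using cd_inj_aux[of "length \<alpha>"] by blast
  qed
  show "comp_descents ` pseudo_comps n = Pow {..<n}"
    using cd_lt cd_surj by blast
qed

lemma card_pc_pred: "card {\<alpha> \<in> pseudo_comps n. P (comp_descents \<alpha>)} = card {S \<in> Pow {..<n}. P S}"
proof -
  have "bij_betw comp_descents {\<alpha> \<in> pseudo_comps n. P (comp_descents \<alpha>)} {S \<in> Pow {..<n}. P S}"
  proof (rule bij_betw_imageI)
    show "inj_on comp_descents {\<alpha> \<in> pseudo_comps n. P (comp_descents \<alpha>)}"
      using cd_bij unfolding bij_betw_def by (rule inj_on_subset[OF conjunct1]) auto
    show "comp_descents ` {\<alpha> \<in> pseudo_comps n. P (comp_descents \<alpha>)} = {S \<in> Pow {..<n}. P S}"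
    proof (intro equalityI subsetI)
      fix S assume "S \<in> comp_descents ` {\<alpha> \<in> pseudo_comps n. P (comp_descents \<alpha>)}"
      then show "S \<in> {S \<in> Pow {..<n}. P S}" using cd_lt by blast
    next
      fix S assume "S \<in> {S \<in> Pow {..<n}. P S}"
      then obtain \<alpha> where "\<alpha> \<in> pseudo_comps n" "comp_descents \<alpha> = S" "P S" using cd_surj by blast
      then show "S \<in> comp_descents ` {\<alpha> \<in> pseudo_comps n. P (comp_descents \<alpha>)}" by blast
    qed
  qed
  then show ?thesis by (rule bij_betw_same_card)
qed

lemma bij_card_filter:
  assumes "bij_betw f A B"
  shows "card {y \<in> B. P y} = card {x \<in> A. P (f x)}"
proof -
  have "bij_betw f {x \<in> A. P (f x)} {y \<in> B. P y}"
  proof (rule bij_betw_imageI)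
    show "inj_on f {x \<in> A. P (f x)}" using assms unfolding bij_betw_def by (rule inj_on_subset[OF conjunct1]) auto
    show "f ` {x \<in> A. P (f x)} = {y \<in> B. P y}"
    proof (intro equalityI subsetI)
      fix y assume "y \<in> f ` {x \<in> A. P (f x)}"
      then show "y \<in> {y \<in> B. P y}" using assms bij_betwE by blast
    next
      fix y assume y: "y \<in> {y \<in> B. P y}"
      then obtain x where "x \<in> A" "f x = y" using assms unfolding bij_betw_def by (metis (no_types, lifting) image_iff mem_Collect_eq)
      then show "y \<in> f ` {x \<in> A. P (f x)}" using y by blast
    qed
  qed
  then show ?thesis by (rule bij_betw_same_card[symmetric])
qed

lemma Phi_bij:
  fixes q m n :: nat
  assumes q0: "q > 0" and n: "n = m * q"
  defines "N \<equiv> {x. x < n \<and> \<not> q dvd x}"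
  shows "bij_betw (\<lambda>(S0, E). (\<lambda>s. q * s) ` S0 \<union> E) (Pow {..<m} \<times> Pow N) (Pow {..<n})"
proof -
  let ?f = "\<lambda>s. q * s"
  let ?P = "\<lambda>(S0, E). ?f ` S0 \<union> E"
  have injf: "inj ?f" using q0 by (auto intro: inj_onI)
  have key: "\<And>S0 E. S0 \<subseteq> {..<m} \<Longrightarrow> E \<subseteq> N \<Longrightarrow> (?f ` S0 \<union> E) \<inter> N = E \<and> (?f ` S0 \<union> E) - N = ?f ` S0"
    unfolding N_def by auto
  show ?thesis
  proof (rule bij_betw_imageI)
    show "inj_on ?P (Pow {..<m} \<times> Pow N)"
    proof (rule inj_onI)
      fix a b assume a: "a \<in> Pow {..<m} \<times> Pow N" and b: "b \<in> Pow {..<m} \<times> Pow N" and e: "?P a = ?P b"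
      obtain S0 E where aa: "a = (S0, E)" by (cases a)
      obtain S0' E' where bb: "b = (S0', E')" by (cases b)
      have h: "S0 \<subseteq> {..<m}" "E \<subseteq> N" "S0' \<subseteq> {..<m}" "E' \<subseteq> N" using a b aa bb by auto
      have e': "?f ` S0 \<union> E = ?f ` S0' \<union> E'" using e aa bb by simp
      have "E = (?f ` S0 \<union> E) \<inter> N" using key[OF h(1,2)] by simp
      also have "\<dots> = (?f ` S0' \<union> E') \<inter> N" using e' by simp
      also have "\<dots> = E'" using key[OF h(3,4)] by simp
      finally have "E = E'" .
      have "?f ` S0 = (?f ` S0 \<union> E) - N" using key[OF h(1,2)] by simp
      also have "\<dots> = (?f ` S0' \<union> E') - N" using e' by simp
      also have "\<dots> = ?f ` S0'" using key[OF h(3,4)] by simp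
      finally have "?f ` S0 = ?f ` S0'" .
      then have "S0 = S0'" using injf by (simp add: inj_image_eq_iff)
      then show "a = b" using aa bb \<open>E = E'\<close> by simp
    qed
    show "?P ` (Pow {..<m} \<times> Pow N) = Pow {..<n}"
    proof (intro equalityI subsetI)
      fix S assume "S \<in> ?P ` (Pow {..<m} \<times> Pow N)"
      then obtain S0 E where "S0 \<subseteq> {..<m}" "E \<subseteq> N" "S = ?f ` S0 \<union> E" by auto
      then show "S \<in> Pow {..<n}" unfolding N_def using n q0 by (auto simp: mult.commute)
    next
      fix S assume S: "S \<in> Pow {..<n}"
      define S0 where "S0 = {s. s < m \<and> q * s \<in> S}"
      define E where "E = S \<inter> N"
      have "S = ?f ` S0 \<union> E"
      proof (intro equalityI subsetI)
        fix x assume x: "x \<in> S"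
        show "x \<in> ?f ` S0 \<union> E"
        proof (cases "q dvd x")
          case True
          then obtain s where s: "x = q * s" by (auto elim: dvdE)
          have "x < n" using x S by auto
          then have "s < m" using s n q0 by (simp add: mult.commute)
          then show ?thesis using s x unfolding S0_def by auto
        next
          case False then show ?thesis using x S unfolding E_def N_def by auto
        qed
      next
        fix x assume "x \<in> ?f ` S0 \<union> E"
        then show "x \<in> S" unfolding S0_def E_def by auto
      qed
      moreover have "(S0, E) \<in> Pow {..<m} \<times> Pow N" unfolding S0_def E_def by auto
      ultimately show "S \<in> ?P ` (Pow {..<m} \<times> Pow N)" by force
    qed
  qed
qed

lemma card_N:
  fixes q m n :: nat
  assumes q0: "q > 0" and n: "n = m * q"
  shows "card {x. x < n \<and> \<not> q dvd x} = n - m"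
proof -
  let ?M = "(\<lambda>s. q * s) ` {..<m}"
  have injf: "inj (\<lambda>s. q * s)" using q0 by (auto intro: inj_onI)
  have eq: "{x. x < n \<and> \<not> q dvd x} = {..<n} - ?M" using n q0 by (auto simp: mult.commute)
  have sub: "?M \<subseteq> {..<n}" using n q0 by (auto simp: mult.commute)
  have "card ?M = m" using card_image[OF inj_on_subset[OF injf]] by simp
  then show ?thesis unfolding eq using card_Diff_subset[OF _ sub] by simp
qed

lemma even_odd_subsets:
  assumes fN: "finite N" and ne: "N \<noteq> {}"
  shows "card {E \<in> Pow N. even (card E)} = 2 ^ (card N - 1)" "card {E \<in> Pow N. odd (card E)} = 2 ^ (card N - 1)"
proof -
  have eqc: "card {E \<in> Pow N. even (card E)} = card {E \<in> Pow N. odd (card E)}"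
    using card_subsupersets_even_odd[OF fN, of "{}"] ne by (simp add: Pow_def psubset_eq)
  have pe: "Pow N = {E \<in> Pow N. even (card E)} \<union> {E \<in> Pow N. odd (card E)}" by auto
  have "card (Pow N) = card ({E \<in> Pow N. even (card E)} \<union> {E \<in> Pow N. odd (card E)})"
    using pe by (rule arg_cong)
  also have "\<dots> = card {E \<in> Pow N. even (card E)} + card {E \<in> Pow N. odd (card E)}"
    by (rule card_Un_disjoint) (use fN in auto)
  finally have "card (Pow N) = card {E \<in> Pow N. even (card E)} + card {E \<in> Pow N. odd (card E)}" .
  then have s: "2 ^ card N = 2 * card {E \<in> Pow N. even (card E)}" using eqc by (simp add: card_Pow fN)
  have "card N \<ge> 1" using fN ne by (simp add: Suc_leI card_gt_0_iff)
  then have "(2::nat) ^ card N = 2 * 2 ^ (card N - 1)" by (simp add: power_eq_if)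
  then show "card {E \<in> Pow N. even (card E)} = 2 ^ (card N - 1)" using s by simp
  then show "card {E \<in> Pow N. odd (card E)} = 2 ^ (card N - 1)" using eqc by simp
qed

lemma sum_if_card: "finite A \<Longrightarrow> (\<Sum>x\<in>A. if Q x then c else 0) = c * card {x\<in>A. Q x}"
  by (simp add: sum.inter_filter[symmetric])

lemma inner_count:
  fixes R i P :: int
  assumes fN: "finite N" and ne: "N \<noteq> {}"
  shows "card {E \<in> Pow N. [(-1) ^ card E * R = i] (mod P)} =
    (if [R = i] (mod P) then 2 ^ (card N - 1) else 0) + (if [-R = i] (mod P) then 2 ^ (card N - 1) else 0)"
proof -
  let ?ev = "{E \<in> Pow N. even (card E)}" and ?od = "{E \<in> Pow N. odd (card E)}"
  have eq: "{E \<in> Pow N. [(-1) ^ card E * R = i] (mod P)} = {E \<in> ?ev. [R = i] (mod P)} \<union> {E \<in> ?od. [-R = i] (mod P)}"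
    by (auto simp: minus_one_power_iff)
  have c1: "card {E \<in> ?ev. [R = i] (mod P)} = (if [R = i] (mod P) then 2 ^ (card N - 1) else 0)"
    using even_odd_subsets[OF fN ne] by auto
  have c2: "card {E \<in> ?od. [-R = i] (mod P)} = (if [-R = i] (mod P) then 2 ^ (card N - 1) else 0)"
    using even_odd_subsets[OF fN ne] by auto
  have "card ({E \<in> ?ev. [R = i] (mod P)} \<union> {E \<in> ?od. [-R = i] (mod P)}) = card {E \<in> ?ev. [R = i] (mod P)} + card {E \<in> ?od. [-R = i] (mod P)}"
    by (rule card_Un_disjoint) (use fN in auto)
  then show ?thesis unfolding eq c1 c2 .
qed

lemma count_by_S:
  assumes "\<And>k. True"
  shows "card {\<gamma> \<in> pseudo_comps k. Q (int (ribbonB \<gamma>))} = card {S \<in> Pow {..<k}. Q (int (ex {1..int k} S))}"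
proof -
  have "{\<gamma> \<in> pseudo_comps k. Q (int (ribbonB \<gamma>))} = {\<gamma> \<in> pseudo_comps k. Q (int (ex {1..int k} (comp_descents \<gamma>)))}"
  proof (rule Collect_cong)
    fix \<gamma>
    show "(\<gamma> \<in> pseudo_comps k \<and> Q (int (ribbonB \<gamma>))) = (\<gamma> \<in> pseudo_comps k \<and> Q (int (ex {1..int k} (comp_descents \<gamma>))))"
      using ribbon_ex[of \<gamma>] unfolding pseudo_comps_def by auto
  qed
  then show ?thesis using card_pc_pred[of k "\<lambda>S. Q (int (ex {1..int k} S))"] by simp
qed

lemma two_sided:
  fixes p :: nat and i R :: int
  assumes p: "prime p" and op: "odd p" and i0: "0 < i" and ip: "i < int p"
  shows "\<not> ([R = i] (mod int p) \<and> [-R = i] (mod int p))"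
proof
  assume h: "[R = i] (mod int p) \<and> [-R = i] (mod int p)"
  then have "int p dvd (R - i)" "int p dvd (-R - i)" by (auto simp: cong_iff_dvd_diff)
  then have "int p dvd ((R - i) + (-R - i))" by (rule dvd_add)
  moreover have "(R - i) + (-R - i) = - (2 * i)" by simp
  ultimately have "int p dvd (2 * i)" by simp
  moreover obtain j where j: "i = int j" using i0 by (metis zero_le_imp_eq_int less_imp_le)
  ultimately have "p dvd 2 * j" by (metis int_dvd_int_iff of_nat_mult of_nat_numeral)
  then have "p dvd 2 \<or> p dvd j" using p prime_dvd_mult_iff by blast
  moreover have "\<not> p dvd 2"
  proof
    assume "p dvd 2"
    then have "p \<le> 2" by (simp add: dvd_imp_le)
    then show False using op p prime_gt_1_nat[OF p] by (cases "p = 2") auto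
  qed
  moreover have "\<not> p dvd j" using j i0 ip by (auto dest: dvd_imp_le)
  ultimately show False by blast
qed

theorem corollary4p5:
  fixes p m d n :: nat and i :: int
  assumes "prime p" and "odd p"
    and "1 \<le> m" and "m \<le> p - 1"
    and "n = m * p ^ d"
    and "0 \<le> i" and "i < int p"
  shows "cB p i n =
    (if i = 0 \<or> d = 0
     then 2 ^ (n - m) * card {\<gamma> \<in> pseudo_comps m. [int (ribbonB \<gamma>) = i] (mod int p)}
     else 2 ^ (n - m - 1) * card {\<gamma> \<in> pseudo_comps m.
            [int (ribbonB \<gamma>) = i] (mod int p) \<or> [int (ribbonB \<gamma>) = - i] (mod int p)})"
proof (cases "d = 0")
  case True
  then show ?thesis using assms(5) unfolding cB_def by simp
next
  case False
  note p = assms(1) and op = assms(2)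
  let ?q = "p ^ d"
  have p1: "p > 1" using prime_gt_1_nat[OF p] .
  have q1: "?q > 1" using one_less_power[OF p1, of d] False by simp
  have q0: "?q > 0" using p1 by simp
  define N where "N = {x. x < n \<and> \<not> ?q dvd x}"
  have n': "n = m * ?q" using assms(5) .
  have cN: "card N = n - m" unfolding N_def using card_N[OF q0 n'] .
  have fN: "finite N" unfolding N_def by simp
  have "1 < n" using n' q1 assms(3) by (metis less_le_trans mult_1 mult_le_cancel2 not_less)
  moreover have "\<not> ?q dvd 1"
  proof
    assume "?q dvd 1"
    then have "?q = 1" using nat_dvd_1_iff_1 by blast
    then show False using q1 by linarith
  qed
  ultimately have "1 \<in> N" unfolding N_def by simp
  then have neN: "N \<noteq> {}" by blast
  let ?R = "\<lambda>S0. int (ex {1..int m} S0)"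
  let ?Phi = "\<lambda>(S0, E). (\<lambda>s. ?q * s) ` S0 \<union> E"
  have bij: "bij_betw ?Phi (Pow {..<m} \<times> Pow N) (Pow {..<n})" unfolding N_def by (rule Phi_bij[OF q0 n'])
  have key: "card {S \<in> Pow {..<n}. Q (int (ex {1..int n} S))} =
      (\<Sum>S0\<in>Pow {..<m}. card {E \<in> Pow N. Q ((-1) ^ card E * ?R S0)})"
    if congQ: "\<And>a b. [a = b] (mod int p) \<Longrightarrow> Q a = Q b" for Q :: "int \<Rightarrow> bool"
  proof -
    have "card {S \<in> Pow {..<n}. Q (int (ex {1..int n} S))} = card {x \<in> Pow {..<m} \<times> Pow N. Q (int (ex {1..int n} (?Phi x)))}"
      by (rule bij_card_filter[OF bij])
    also have "{x \<in> Pow {..<m} \<times> Pow N. Q (int (ex {1..int n} (?Phi x)))} = Sigma (Pow {..<m}) (\<lambda>S0. {E \<in> Pow N. Q ((-1) ^ card E * ?R S0)})"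
    proof (intro equalityI subsetI)
      fix x assume x: "x \<in> {x \<in> Pow {..<m} \<times> Pow N. Q (int (ex {1..int n} (?Phi x)))}"
      obtain S0 E where xe: "x = (S0, E)" by (cases x)
      have h: "S0 \<subseteq> {..<m}" "E \<subseteq> N" using x xe by auto
      have px: "?Phi x = (\<lambda>s. ?q * s) ` S0 \<union> E" using xe by simp
      have "[int (ex {1..int n} ((\<lambda>s. ?q * s) ` S0 \<union> E)) = (-1) ^ card E * ?R S0] (mod int p)"
        using main_cong[OF p op n' h(1) h(2)[unfolded N_def]] .
      then have qq: "Q (int (ex {1..int n} (?Phi x))) = Q ((-1) ^ card E * ?R S0)" unfolding px by (rule congQ)
      have "Q (int (ex {1..int n} (?Phi x)))" using x by blast
      then have "Q ((-1) ^ card E * ?R S0)" using qq by simp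
      then show "x \<in> Sigma (Pow {..<m}) (\<lambda>S0. {E \<in> Pow N. Q ((-1) ^ card E * ?R S0)})"
        unfolding xe using h by blast
    next
      fix x assume x: "x \<in> Sigma (Pow {..<m}) (\<lambda>S0. {E \<in> Pow N. Q ((-1) ^ card E * ?R S0)})"
      obtain S0 E where xe: "x = (S0, E)" by (cases x)
      have h: "S0 \<subseteq> {..<m}" "E \<subseteq> N" using x xe by auto
      have px: "?Phi x = (\<lambda>s. ?q * s) ` S0 \<union> E" using xe by simp
      have "[int (ex {1..int n} ((\<lambda>s. ?q * s) ` S0 \<union> E)) = (-1) ^ card E * ?R S0] (mod int p)"
        using main_cong[OF p op n' h(1) h(2)[unfolded N_def]] .
      then have qq: "Q (int (ex {1..int n} (?Phi x))) = Q ((-1) ^ card E * ?R S0)" unfolding px by (rule congQ)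
      have "Q ((-1) ^ card E * ?R S0)" using x xe by blast
      then have "Q (int (ex {1..int n} (?Phi x)))" using qq by simp
      then show "x \<in> {x \<in> Pow {..<m} \<times> Pow N. Q (int (ex {1..int n} (?Phi x)))}"
        using h xe by blast
    qed
    also have "card \<dots> = (\<Sum>S0\<in>Pow {..<m}. card {E \<in> Pow N. Q ((-1) ^ card E * ?R S0)})"
      by (rule card_SigmaI) (use fN in auto)
    finally show "card {S \<in> Pow {..<n}. Q (int (ex {1..int n} S))} =
      (\<Sum>S0\<in>Pow {..<m}. card {E \<in> Pow N. Q ((-1) ^ card E * ?R S0)})" .
  qed
  have congI: "\<And>c a b. [a = b] (mod int p) \<Longrightarrow> [a = c] (mod int p) = [b = c] (mod int p)"
    by (meson cong_sym cong_trans)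
  have lhs: "cB p i n = card {S \<in> Pow {..<n}. [int (ex {1..int n} S) = i] (mod int p)}"
    unfolding cB_def by (rule count_by_S[where Q = "\<lambda>x. [x = i] (mod int p)"]) simp
  also have "\<dots> = (\<Sum>S0\<in>Pow {..<m}. card {E \<in> Pow N. [(-1) ^ card E * ?R S0 = i] (mod int p)})"
    by (rule key) (rule congI)
  also have "\<dots> = (\<Sum>S0\<in>Pow {..<m}. (if [?R S0 = i] (mod int p) then 2 ^ (card N - 1) else 0) + (if [- ?R S0 = i] (mod int p) then 2 ^ (card N - 1) else 0))"
    using inner_count[OF fN neN] by simp
  finally have main: "cB p i n = (\<Sum>S0\<in>Pow {..<m}. (if [?R S0 = i] (mod int p) then 2 ^ (card N - 1) else 0) + (if [- ?R S0 = i] (mod int p) then 2 ^ (card N - 1) else 0))" .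
  have neg: "[- R = i] (mod int p) \<longleftrightarrow> [R = - i] (mod int p)" for R
  proof -
    have e: "-R - i = -(R - - i)" by simp
    have "int p dvd (-R - i) \<longleftrightarrow> int p dvd (R - - i)" unfolding e by (rule dvd_minus_iff)
    then show ?thesis by (simp only: cong_iff_dvd_diff)
  qed
  have rhs_card: "\<And>Q. card {\<gamma> \<in> pseudo_comps m. Q (int (ribbonB \<gamma>))} = card {S0 \<in> Pow {..<m}. Q (?R S0)}"
    by (rule count_by_S) simp
  have k1: "card N \<ge> 1" using fN neN by (simp add: Suc_leI card_gt_0_iff)
  show ?thesis
  proof (cases "i = 0")
    case True
    have "\<And>S0. (if [?R S0 = i] (mod int p) then 2 ^ (card N - 1) else 0) + (if [- ?R S0 = i] (mod int p) then 2 ^ (card N - 1) else 0)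
        = (if [?R S0 = i] (mod int p) then 2 ^ card N else (0::nat))"
    proof -
      fix S0
      have "[- ?R S0 = i] (mod int p) \<longleftrightarrow> [?R S0 = i] (mod int p)" using neg True by simp
      moreover have "(2::nat) ^ (card N - 1) + 2 ^ (card N - 1) = 2 ^ card N" using k1
        by (cases "card N") auto
      ultimately show "(if [?R S0 = i] (mod int p) then 2 ^ (card N - 1) else 0) + (if [- ?R S0 = i] (mod int p) then 2 ^ (card N - 1) else 0)
        = (if [?R S0 = i] (mod int p) then 2 ^ card N else (0::nat))" by simp
    qed
    then have "cB p i n = (\<Sum>S0\<in>Pow {..<m}. if [?R S0 = i] (mod int p) then 2 ^ card N else 0)"
      using main by simp
    also have "\<dots> = 2 ^ card N * card {S0 \<in> Pow {..<m}. [?R S0 = i] (mod int p)}"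
      by (rule sum_if_card) simp
    finally show ?thesis using True cN rhs_card[of "\<lambda>x. [x = i] (mod int p)"] by simp
  next
    case i0: False
    have ip: "0 < i" using i0 assms(6) by simp
    have "\<And>S0. (if [?R S0 = i] (mod int p) then 2 ^ (card N - 1) else 0) + (if [- ?R S0 = i] (mod int p) then 2 ^ (card N - 1) else 0)
        = (if [?R S0 = i] (mod int p) \<or> [?R S0 = - i] (mod int p) then 2 ^ (card N - 1) else (0::nat))"
    proof -
      fix S0
      have "\<not> ([?R S0 = i] (mod int p) \<and> [- ?R S0 = i] (mod int p))" using two_sided[OF p op ip assms(7)] .
      then show "(if [?R S0 = i] (mod int p) then 2 ^ (card N - 1) else 0) + (if [- ?R S0 = i] (mod int p) then 2 ^ (card N - 1) else 0)
        = (if [?R S0 = i] (mod int p) \<or> [?R S0 = - i] (mod int p) then 2 ^ (card N - 1) else (0::nat))"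
        using neg[of "?R S0"] by auto
    qed
    then have "cB p i n = (\<Sum>S0\<in>Pow {..<m}. if [?R S0 = i] (mod int p) \<or> [?R S0 = - i] (mod int p) then 2 ^ (card N - 1) else 0)"
      using main by simp
    also have "\<dots> = 2 ^ (card N - 1) * card {S0 \<in> Pow {..<m}. [?R S0 = i] (mod int p) \<or> [?R S0 = - i] (mod int p)}"
      by (rule sum_if_card) simp
    finally show ?thesis using i0 False cN rhs_card[of "\<lambda>x. [x = i] (mod int p) \<or> [x = - i] (mod int p)"] by simp
  qed
qed

end
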